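(* For every integer $n\ge 1$, the toric ideal $I_{S_n}$ has a state polytope that is unimodularly equivalent to the permutohedron $\Pi_n$. In particular, $I_{S_n}$ has exactly $n!$ distinct initial ideals, namely the initial ideals with respect to the weight vectors $(\pi,\pi^c)\in\mathbb{R}^{2n}$ for $\pi\in\mathfrak{S}_n$.
   Context: With $e_i\in\mathbb{R}^{n+1}$ the standard basis vectors, let $s_i=e_1+e_{i+1}+e_{n+1}$ for $1\le i<n$, $s_n=e_1+e_{n+1}$, $s_i=e_{i+1-n}+e_{n+1}$ for $n<i<2n$, $s_{2n}=e_{n+1}$. The toric ideal $I_{S_n}$ is the kernel of $\mathbb{C}[t_1,\dots,t_{2n}]\to\mathbb{C}[x_1,\dots,x_{n+1}]$, $t_i\mapsto x^{s_i}$; it is homogeneous. For a weight $w\in\mathbb{R}^{2n}$, the initial ideal is generated by the initial forms (terms of maximal $w$-weight, ties broken by a fixed monomial order) of elements of the ideal. The Gröbner fan of a homogeneous ideal is the fan whose cones are the closures of the sets of weight vectors giving the same initial ideal; a state polytope of the ideal is a polytope whose normal fan (with normal cones $N_P(F)=\{a:\ F \text{ is the set of maximizers of } a\cdot x \text{ on } P\}$) equals the Gröbner fan. $\Pi_n=\mathrm{conv}\{(\pi_1,\dots,\pi_n):\pi\in\mathfrak{S}_n\}$, and for $\pi\in\mathfrak{S}_n$, $\pi^c=(n+1-\pi_1,\dots,n+1-\pi_n)$. Polytopes $P,P'\subseteq\mathbb{R}^m$ are unimodularly equivalent if $P'=MP+v$ with $M\in\mathrm{GL}_m(\mathbb{Z})$,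 $v\in\mathbb{Z}^m$; for $P\subseteq\mathbb{R}^N$, $P'\subseteq\mathbb{R}^m$, $N>m$, this means $P$ is unimodularly equivalent to $P'\times\{0\}$. *)

theory Defs
  imports "HOL-Analysis.Analysis" "HOL-Analysis.Finite_Function_Topology"
    "HOL-Library.Poly_Mapping" "HOL-Combinatorics.Permutations"
begin

text \<open>All indices are 1-based as in the paper.
 Real vectors of R^m are elements x of type nat =>0 real whose support lies in {1..m}
 (this type is a real normed vector space; on vectors supported in {1..m} its topology is
 the Euclidean one). Polynomials in the variables t_1,...,t_2n are elements of
 (nat =>0 nat) =>0 complex whose monomials (exponent vectors) only involve indices in {1..2n};
 Poly_Mapping provides the commutative ring structure.\<close>

definition Rvec :: "nat \<Rightarrow> (nat \<Rightarrow>\<^sub>0 real) set" where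
  "Rvec m = {x. Poly_Mapping.keys x \<subseteq> {1..m}}"

type_synonym mon = "nat \<Rightarrow>\<^sub>0 nat"
type_synonym cpoly = "mon \<Rightarrow>\<^sub>0 complex"

definition poly_ring :: "nat \<Rightarrow> cpoly set" where
  "poly_ring m = {p. \<forall>a\<in>Poly_Mapping.keys p. Poly_Mapping.keys a \<subseteq> {1..m}}"

definition evec :: "nat \<Rightarrow> nat \<Rightarrow> nat" where
  "evec k = (\<lambda>j. if j = k then 1 else 0)"

definition svec :: "nat \<Rightarrow> nat \<Rightarrow> nat \<Rightarrow> nat" where
  "svec n i =
     (if i < n then (\<lambda>j. evec 1 j + evec (i+1) j + evec (n+1) j)
      else if i = n then (\<lambda>j. evec 1 j + evec (n+1) j)
      else if i < 2*n then (\<lambda>j. evec (i+1-n) j + evec (n+1) j)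
      else evec (n+1))"

text \<open>Exponent vector of the image of the monomial t^a under t_i |-> x^(s_i).\<close>
definition toric_exp :: "nat \<Rightarrow> mon \<Rightarrow> nat \<Rightarrow> nat" where
  "toric_exp n a = (\<lambda>j. \<Sum>i\<in>Poly_Mapping.keys a. Poly_Mapping.lookup a i * svec n i j)"

text \<open>Coefficient of x^b in the image of p under the C-algebra map t_i |-> x^(s_i).\<close>
definition toric_image_coeff :: "nat \<Rightarrow> cpoly \<Rightarrow> (nat \<Rightarrow> nat) \<Rightarrow> complex" where
  "toric_image_coeff n p b =
     (\<Sum>a\<in>{a\<in>Poly_Mapping.keys p. toric_exp n a = b}. Poly_Mapping.lookup p a)"

definition toric_ideal :: "nat \<Rightarrow> cpoly set" where
  "toric_ideal n = {p \<in> poly_ring (2*n). \<forall>b. toric_image_coeff n p b = 0}"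

definition is_ideal :: "nat \<Rightarrow> cpoly set \<Rightarrow> bool" where
  "is_ideal m J \<longleftrightarrow> J \<subseteq> poly_ring m \<and> 0 \<in> J \<and> (\<forall>x\<in>J. \<forall>y\<in>J. x + y \<in> J)
      \<and> (\<forall>r\<in>poly_ring m. \<forall>x\<in>J. r * x \<in> J)"

definition ideal_gen :: "nat \<Rightarrow> cpoly set \<Rightarrow> cpoly set" where
  "ideal_gen m G = \<Inter>{J. is_ideal m J \<and> G \<subseteq> J}"

text \<open>Monomial orders (on exponent vectors; ord a b means t^a \<preceq> t^b).\<close>
definition monomial_order :: "(mon \<Rightarrow> mon \<Rightarrow> bool) \<Rightarrow> bool" where
  "monomial_order ord \<longleftrightarrow>
     (\<forall>a. ord a a) \<and> (\<forall>a b. ord a b \<and> ord b a \<longrightarrow> a = b)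
   \<and> (\<forall>a b c. ord a b \<and> ord b c \<longrightarrow> ord a c) \<and> (\<forall>a b. ord a b \<or> ord b a)
   \<and> (\<forall>a b c. ord a b \<longrightarrow> ord (a + c) (b + c)) \<and> (\<forall>a. ord 0 a)"

definition mweight :: "(nat \<Rightarrow>\<^sub>0 real) \<Rightarrow> mon \<Rightarrow> real" where
  "mweight w a = (\<Sum>i\<in>Poly_Mapping.keys a. Poly_Mapping.lookup w i * real (Poly_Mapping.lookup a i))"

definition init_mon :: "(mon \<Rightarrow> mon \<Rightarrow> bool) \<Rightarrow> (nat \<Rightarrow>\<^sub>0 real) \<Rightarrow> cpoly \<Rightarrow> mon" where
  "init_mon ord w f = (THE a. a \<in> Poly_Mapping.keys f \<and>
      (\<forall>b\<in>Poly_Mapping.keys f. b \<noteq> a \<longrightarrow>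
          mweight w b < mweight w a \<or> (mweight w b = mweight w a \<and> ord b a)))"

definition init_form :: "(mon \<Rightarrow> mon \<Rightarrow> bool) \<Rightarrow> (nat \<Rightarrow>\<^sub>0 real) \<Rightarrow> cpoly \<Rightarrow> cpoly" where
  "init_form ord w f = Poly_Mapping.single (init_mon ord w f) (Poly_Mapping.lookup f (init_mon ord w f))"

definition init_ideal :: "(mon \<Rightarrow> mon \<Rightarrow> bool) \<Rightarrow> nat \<Rightarrow> (nat \<Rightarrow>\<^sub>0 real) \<Rightarrow> cpoly set \<Rightarrow> cpoly set" where
  "init_ideal ord m w I = ideal_gen m {init_form ord w f | f. f \<in> I \<and> f \<noteq> 0}"

definition groebner_cones :: "(mon \<Rightarrow> mon \<Rightarrow> bool) \<Rightarrow> nat \<Rightarrow> cpoly set \<Rightarrow> (nat \<Rightarrow>\<^sub>0 real) set set" where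
  "groebner_cones ord m I =
     {closure {w' \<in> Rvec m. init_ideal ord m w' I = init_ideal ord m w I} | w. w \<in> Rvec m}"

definition dotp :: "nat \<Rightarrow> (nat \<Rightarrow>\<^sub>0 real) \<Rightarrow> (nat \<Rightarrow>\<^sub>0 real) \<Rightarrow> real" where
  "dotp m a x = (\<Sum>i\<in>{1..m}. Poly_Mapping.lookup a i * Poly_Mapping.lookup x i)"

definition maximizers :: "nat \<Rightarrow> (nat \<Rightarrow>\<^sub>0 real) set \<Rightarrow> (nat \<Rightarrow>\<^sub>0 real) \<Rightarrow> (nat \<Rightarrow>\<^sub>0 real) set" where
  "maximizers m P a = {x \<in> P. \<forall>y\<in>P. dotp m a y \<le> dotp m a x}"

definition normal_cone :: "nat \<Rightarrow> (nat \<Rightarrow>\<^sub>0 real) set \<Rightarrow> (nat \<Rightarrow>\<^sub>0 real) set \<Rightarrow> (nat \<Rightarrow>\<^sub>0 real) set" where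
  "normal_cone m P F = {a \<in> Rvec m. maximizers m P a = F}"

definition normal_fan_max_cones :: "nat \<Rightarrow> (nat \<Rightarrow>\<^sub>0 real) set \<Rightarrow> (nat \<Rightarrow>\<^sub>0 real) set set" where
  "normal_fan_max_cones m P =
     {closure (normal_cone m P {v}) | v. normal_cone m P {v} \<noteq> {}}"

definition polytope_in :: "nat \<Rightarrow> (nat \<Rightarrow>\<^sub>0 real) set \<Rightarrow> bool" where
  "polytope_in m P \<longleftrightarrow> (\<exists>S. finite S \<and> S \<subseteq> Rvec m \<and> P = convex hull S)"

definition state_polytope :: "(mon \<Rightarrow> mon \<Rightarrow> bool) \<Rightarrow> nat \<Rightarrow> cpoly set \<Rightarrow> (nat \<Rightarrow>\<^sub>0 real) set \<Rightarrow> bool" where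
  "state_polytope ord m I P \<longleftrightarrow>
     polytope_in m P \<and> normal_fan_max_cones m P = groebner_cones ord m I"

definition unimod_equiv :: "nat \<Rightarrow> (nat \<Rightarrow>\<^sub>0 real) set \<Rightarrow> (nat \<Rightarrow>\<^sub>0 real) set \<Rightarrow> bool" where
  "unimod_equiv m P Q \<longleftrightarrow>
     (\<exists>(M::nat \<Rightarrow> nat \<Rightarrow> int) (N::nat \<Rightarrow> nat \<Rightarrow> int) (v::nat \<Rightarrow> int).
        (\<forall>i\<in>{1..m}. \<forall>j\<in>{1..m}.
            (\<Sum>k\<in>{1..m}. M i k * N k j) = (if i = j then 1 else 0)
          \<and> (\<Sum>k\<in>{1..m}. N i k * M k j) = (if i = j then 1 else 0))
      \<and> Q = (\<lambda>x. \<Sum>i\<in>{1..m}. Poly_Mapping.single i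
                 (of_int (v i) + (\<Sum>j\<in>{1..m}. of_int (M i j) * Poly_Mapping.lookup x j))) ` P)"

text \<open>Permutohedron Pi_n in R^n (as a subset of R^m for any m >= n this is Pi_n x {0}).\<close>
definition perm_vec :: "nat \<Rightarrow> (nat \<Rightarrow> nat) \<Rightarrow> (nat \<Rightarrow>\<^sub>0 real)" where
  "perm_vec n \<pi> = (\<Sum>i\<in>{1..n}. Poly_Mapping.single i (real (\<pi> i)))"

definition permutohedron :: "nat \<Rightarrow> (nat \<Rightarrow>\<^sub>0 real) set" where
  "permutohedron n = convex hull {perm_vec n \<pi> | \<pi>. \<pi> permutes {1..n}}"

definition perm_weight :: "nat \<Rightarrow> (nat \<Rightarrow> nat) \<Rightarrow> (nat \<Rightarrow>\<^sub>0 real)" where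
  "perm_weight n \<pi> = (\<Sum>i\<in>{1..n}. Poly_Mapping.single i (real (\<pi> i))
                        + Poly_Mapping.single (n + i) (real (n + 1 - \<pi> i)))"

end

theory Submission
  imports Defs
begin

declare One_nat_def [simp del]

abbreviation "lk \<equiv> Poly_Mapping.lookup"
abbreviation "ks \<equiv> Poly_Mapping.keys"
abbreviation "sg \<equiv> Poly_Mapping.single"

lemma sum_when_shift:
  fixes n k :: nat
  shows "(\<Sum>i\<in>{1..n}. (g i when n + i = k)) = (if k \<in> {n+1..2*n} then g (k-n) else 0)"
proof (cases "k \<in> {n+1..2*n}")
  case True
  then have "(\<Sum>i\<in>{1..n}. (g i when n + i = k)) = (\<Sum>i\<in>{1..n}. if i = k - n then g i else 0)"
    by (intro sum.cong) (auto simp: when_def)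
  also have "\<dots> = g (k - n)" using True by (subst sum.delta) auto
  finally show ?thesis using True by simp
next
  case False
  then have "(\<Sum>i\<in>{1..n}. (g i when n + i = k)) = (\<Sum>i\<in>{1..n}. 0)"
    by (intro sum.cong) (auto simp: when_def)
  then show ?thesis using False by (simp only: if_False sum.neutral_const)
qed


lemma lk_sum_single2:
  fixes n k :: nat
  shows "lk (\<Sum>i\<in>{1..n}. sg i (f i) + sg (n+i) (g i)) k
     = (if k \<in> {1..n} then f k else if k \<in> {n+1..2*n} then g (k-n) else 0)"
proof -
  have "lk (\<Sum>i\<in>{1..n}. sg i (f i) + sg (n+i) (g i)) k
     = (\<Sum>i\<in>{1..n}. (f i when i = k)) + (\<Sum>i\<in>{1..n}. (g i when n + i = k))"
    by (simp add: lookup_sum lookup_add lookup_single sum.distrib)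
  also have "(\<Sum>i\<in>{1..n}. (f i when i = k)) = (if k \<in> {1..n} then f k else 0)"
    by (simp add: when_def)
  also have "(\<Sum>i\<in>{1..n}. (g i when n + i = k)) = (if k \<in> {n+1..2*n} then g (k-n) else 0)"
    by (rule sum_when_shift)
  finally have *: "lk (\<Sum>i\<in>{1..n}. sg i (f i) + sg (n+i) (g i)) k = 
     (if k \<in> {1..n} then f k else 0) + (if k \<in> {n+1..2*n} then g (k-n) else 0)" .
  show ?thesis
  proof (cases "k \<in> {1..n}")
    case True
    then have "k \<notin> {n+1..2*n}" by auto
    then show ?thesis unfolding * using True by (simp del: atLeastAtMost_iff)
  next
    case False
    then show ?thesis unfolding * by (simp del: atLeastAtMost_iff)
  qed
qed

lemma svec_rel: "1 \<le> n \<Longrightarrow> k \<in> {1..n} \<Longrightarrow> svec n k j = evec 1 j + svec n (n+k) j"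
  unfolding svec_def by (cases "k < n") auto

lemma lookup_scaleR_pm [simp]: "lk (c *\<^sub>R (x::nat \<Rightarrow>\<^sub>0 real)) i = c * lk x i"
proof -
  have "{i. c *\<^sub>R lk x i \<noteq> 0} \<subseteq> ks x" by (auto simp: in_keys_iff)
  then have fin: "finite {i. c *\<^sub>R lk x i \<noteq> 0}" by (rule finite_subset) simp
  have "lk (c *\<^sub>R x) i = c *\<^sub>R lk x i"
    apply (unfold scaleR_poly_mapping_def)
    apply (subst lookup_Abs_poly_mapping[OF fin])
    apply (rule refl)
    done
  then show ?thesis by simp
qed
lemma lk_sum_single: "finite A \<Longrightarrow> lk (\<Sum>i\<in>A. sg i (f i)) k = (if k \<in> A then f k else 0)"
  by (simp add: lookup_sum lookup_single when_def)

lemma keys_add_sub: "x \<in> ks (a + b) \<Longrightarrow> x \<in> ks a \<union> ks b"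
  by (rule subsetD[OF keys_add])

lemma mweight_sup: "finite A \<Longrightarrow> ks a \<subseteq> A \<Longrightarrow> mweight w a = (\<Sum>i\<in>A. lk w i * real (lk a i))"
  unfolding mweight_def by (rule sum.mono_neutral_left) (auto simp: in_keys_iff)

lemma mweight_add: "mweight w (a + b) = mweight w a + mweight w b"
proof -
  let ?A = "ks a \<union> ks b"
  have fA: "finite ?A" by simp
  have "mweight w (a + b) = (\<Sum>i\<in>?A. lk w i * real (lk (a+b) i))"
    by (rule mweight_sup[OF fA]) (auto dest: keys_add_sub)
  also have "\<dots> = (\<Sum>i\<in>?A. lk w i * real (lk a i)) + (\<Sum>i\<in>?A. lk w i * real (lk b i))"
    by (simp add: lookup_add sum.distrib distrib_left)
  also have "(\<Sum>i\<in>?A. lk w i * real (lk a i)) = mweight w a"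
    by (rule mweight_sup[symmetric, OF fA]) auto
  also have "(\<Sum>i\<in>?A. lk w i * real (lk b i)) = mweight w b"
    by (rule mweight_sup[symmetric, OF fA]) auto
  finally show ?thesis .
qed

lemma mweight_single: "mweight w (sg i 1) = lk w i"
  unfolding mweight_def by (simp only: keys_single lookup_single_eq) simp

lemma te_sup: "finite A \<Longrightarrow> ks a \<subseteq> A \<Longrightarrow> toric_exp n a j = (\<Sum>i\<in>A. lk a i * svec n i j)"
  unfolding toric_exp_def by (rule sum.mono_neutral_left) (auto simp: in_keys_iff)

lemma te_add: "toric_exp n (a + b) j = toric_exp n a j + toric_exp n b j"
proof -
  let ?A = "ks a \<union> ks b"
  have fA: "finite ?A" by simp
  have "toric_exp n (a + b) j = (\<Sum>i\<in>?A. lk (a+b) i * svec n i j)"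
    by (rule te_sup[OF fA]) (auto dest: keys_add_sub)
  also have "\<dots> = (\<Sum>i\<in>?A. lk a i * svec n i j) + (\<Sum>i\<in>?A. lk b i * svec n i j)"
    by (simp add: lookup_add sum.distrib distrib_right)
  also have "(\<Sum>i\<in>?A. lk a i * svec n i j) = toric_exp n a j"
    by (rule te_sup[symmetric, OF fA]) auto
  also have "(\<Sum>i\<in>?A. lk b i * svec n i j) = toric_exp n b j"
    by (rule te_sup[symmetric, OF fA]) auto
  finally show ?thesis .
qed

lemma te_single: "toric_exp n (sg i 1) j = svec n i j"
  unfolding toric_exp_def by (simp only: keys_single lookup_single_eq) simp


lemma te_swap:
  assumes "1 \<le> n" "i \<in> {1..n}" "j \<in> {1..n}"
  shows "toric_exp n (c + sg j 1 + sg (n+i) 1) = toric_exp n (c + sg i 1 + sg (n+j) 1)"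
proof
  fix x
  show "toric_exp n (c + sg j 1 + sg (n+i) 1) x = toric_exp n (c + sg i 1 + sg (n+j) 1) x"
    unfolding te_add te_single svec_rel[OF assms(1,2)] svec_rel[OF assms(1,3)] by (simp only: ac_simps)
qed



definition lew :: "(mon \<Rightarrow> mon \<Rightarrow> bool) \<Rightarrow> (nat \<Rightarrow>\<^sub>0 real) \<Rightarrow> mon \<Rightarrow> mon \<Rightarrow> bool" where
  "lew ord w a b \<longleftrightarrow> mweight w a < mweight w b \<or> (mweight w a = mweight w b \<and> ord a b)"

definition ltw :: "(mon \<Rightarrow> mon \<Rightarrow> bool) \<Rightarrow> (nat \<Rightarrow>\<^sub>0 real) \<Rightarrow> mon \<Rightarrow> mon \<Rightarrow> bool" where
  "ltw ord w a b \<longleftrightarrow> lew ord w a b \<and> a \<noteq> b"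

lemma mo_refl: "monomial_order ord \<Longrightarrow> ord a a" unfolding monomial_order_def by blast
lemma mo_antisym: "monomial_order ord \<Longrightarrow> ord a b \<Longrightarrow> ord b a \<Longrightarrow> a = b"
  unfolding monomial_order_def by blast
lemma mo_trans: "monomial_order ord \<Longrightarrow> ord a b \<Longrightarrow> ord b c \<Longrightarrow> ord a c"
  unfolding monomial_order_def by blast
lemma mo_total: "monomial_order ord \<Longrightarrow> ord a b \<or> ord b a"
  unfolding monomial_order_def by blast
lemma mo_add: "monomial_order ord \<Longrightarrow> ord a b \<Longrightarrow> ord (a + c) (b + c)"
  unfolding monomial_order_def by blast

lemma lew_refl: "monomial_order ord \<Longrightarrow> lew ord w a a"
  unfolding lew_def using mo_refl by blast
lemma lew_total: "monomial_order ord \<Longrightarrow> lew ord w a b \<or> lew ord w b a"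
  unfolding lew_def using mo_total[of ord a b] by linarith
lemma lew_antisym: "monomial_order ord \<Longrightarrow> lew ord w a b \<Longrightarrow> lew ord w b a \<Longrightarrow> a = b"
  unfolding lew_def using mo_antisym[of ord a b] by linarith
lemma lew_trans: "monomial_order ord \<Longrightarrow> lew ord w a b \<Longrightarrow> lew ord w b c \<Longrightarrow> lew ord w a c"
  unfolding lew_def using mo_trans[of ord a b c] by (smt (verit))
lemma lew_add: "monomial_order ord \<Longrightarrow> lew ord w a b \<Longrightarrow> lew ord w (a + c) (b + c)"
  unfolding lew_def mweight_add using mo_add[of ord a b c] by auto

lemma ltw_add: "monomial_order ord \<Longrightarrow> ltw ord w a b \<Longrightarrow> ltw ord w (a + c) (b + c)"
  unfolding ltw_def using lew_add by auto
lemma ltw_lew: "ltw ord w a b \<Longrightarrow> lew ord w a b" unfolding ltw_def by simp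
lemma ltw_not: "monomial_order ord \<Longrightarrow> ltw ord w a b \<Longrightarrow> \<not> lew ord w b a"
  unfolding ltw_def using lew_antisym by blast
lemma ltw_total: "monomial_order ord \<Longrightarrow> a \<noteq> b \<Longrightarrow> ltw ord w a b \<or> ltw ord w b a"
  unfolding ltw_def using lew_total by blast
lemma ltw_cancel: "monomial_order ord \<Longrightarrow> ltw ord w (a + c) (b + c) \<Longrightarrow> ltw ord w a b"
proof -
  assume mo: "monomial_order ord" and h: "ltw ord w (a + c) (b + c)"
  then have "a \<noteq> b" unfolding ltw_def by auto
  show "ltw ord w a b"
  proof (rule ccontr)
    assume "\<not> ltw ord w a b"
    then have "ltw ord w b a" using ltw_total[OF mo \<open>a \<noteq> b\<close>] by blast
    then have "ltw ord w (b + c) (a + c)" using ltw_add[OF mo] by blast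
    then show False using h ltw_not[OF mo] ltw_lew by blast
  qed
qed
lemma ltw_trans: "monomial_order ord \<Longrightarrow> ltw ord w a b \<Longrightarrow> ltw ord w b c \<Longrightarrow> ltw ord w a c"
  unfolding ltw_def using lew_trans lew_antisym by blast

lemma lew_max_exists:
  assumes mo: "monomial_order ord"
  shows "finite S \<Longrightarrow> S \<noteq> {} \<Longrightarrow> \<exists>m\<in>S. \<forall>b\<in>S. lew ord w b m"
proof (induction S rule: finite_ne_induct)
  case (singleton x)
  then show ?case using lew_refl[OF mo] by auto
next
  case (insert x F)
  then obtain m where m: "m \<in> F" "\<forall>b\<in>F. lew ord w b m" by blast
  show ?case
  proof (cases "lew ord w m x")
    case True
    then show ?thesis using m lew_trans[OF mo] lew_refl[OF mo] by blast
  next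
    case False
    then have "lew ord w x m" using lew_total[OF mo] by blast
    then show ?thesis using m by blast
  qed
qed

lemma init_mon_body: "(a \<in> ks f \<and> (\<forall>b\<in>ks f. b \<noteq> a \<longrightarrow>
          mweight w b < mweight w a \<or> (mweight w b = mweight w a \<and> ord b a)))
   = (a \<in> ks f \<and> (\<forall>b\<in>ks f. b \<noteq> a \<longrightarrow> lew ord w b a))"
  unfolding lew_def by simp

lemma init_mon_spec:
  assumes mo: "monomial_order ord" and f: "f \<noteq> 0"
  shows "init_mon ord w f \<in> ks f \<and> (\<forall>b\<in>ks f. b \<noteq> init_mon ord w f \<longrightarrow> lew ord w b (init_mon ord w f))"
proof -
  have "ks f \<noteq> {}" using f by simp
  then obtain m where m: "m \<in> ks f" "\<forall>b\<in>ks f. lew ord w b m"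
    using lew_max_exists[OF mo, of "ks f"] by auto
  have ex: "\<exists>!a. a \<in> ks f \<and> (\<forall>b\<in>ks f. b \<noteq> a \<longrightarrow> lew ord w b a)"
  proof (rule ex1I[of _ m])
    show "m \<in> ks f \<and> (\<forall>b\<in>ks f. b \<noteq> m \<longrightarrow> lew ord w b m)" using m by blast
  next
    fix a assume a: "a \<in> ks f \<and> (\<forall>b\<in>ks f. b \<noteq> a \<longrightarrow> lew ord w b a)"
    show "a = m"
    proof (rule ccontr)
      assume "a \<noteq> m"
      then have "lew ord w m a" "lew ord w a m" using a m by auto
      then show False using lew_antisym[OF mo] \<open>a \<noteq> m\<close> by blast
    qed
  qed
  show ?thesis unfolding init_mon_def init_mon_body by (rule theI'[OF ex])
qed

lemma init_mon_eq:
  assumes mo: "monomial_order ord" and m: "m \<in> ks f" "\<forall>b\<in>ks f. b \<noteq> m \<longrightarrow> lew ord w b m"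
  shows "init_mon ord w f = m"
proof -
  have f: "f \<noteq> 0" using m by auto
  note s = init_mon_spec[OF mo f, of w]
  show ?thesis
  proof (rule ccontr)
    assume h: "init_mon ord w f \<noteq> m"
    then have "lew ord w m (init_mon ord w f)" "lew ord w (init_mon ord w f) m" using s m by auto
    then show False using lew_antisym[OF mo] h by blast
  qed
qed



lemma svec_lt: "i < n \<Longrightarrow> svec n i j = evec 1 j + evec (i+1) j + evec (n+1) j"
  by (simp add: svec_def)
lemma svec_eq: "svec n n j = evec 1 j + evec (n+1) j"
  by (simp add: svec_def)
lemma svec_mid: "n < i \<Longrightarrow> i < 2*n \<Longrightarrow> svec n i j = evec (i+1-n) j + evec (n+1) j"
  by (simp add: svec_def)
lemma svec_top: "1 \<le> n \<Longrightarrow> svec n (2*n) j = evec (n+1) j"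
  by (simp add: svec_def)

lemma svec_cases:
  fixes n i :: nat
  assumes "1 \<le> n" "i \<in> {1..2*n}"
  obtains "i < n" | "i = n" | "n < i" "i < 2*n" | "i = 2*n"
  using assms by fastforce

lemma sv1: "1 \<le> n \<Longrightarrow> i \<in> {1..2*n} \<Longrightarrow> svec n i 1 = (if i \<le> n then 1 else 0)"
  by (erule svec_cases, assumption) (simp_all add: svec_lt svec_eq svec_mid svec_top evec_def)
lemma sv2: "1 \<le> n \<Longrightarrow> i \<in> {1..2*n} \<Longrightarrow> k \<in> {1..<n} \<Longrightarrow>
   svec n i (k+1) = (if i = k then 1 else 0) + (if i = n+k then 1 else 0)"
  by (erule svec_cases, assumption) (auto simp add: svec_lt svec_eq svec_mid svec_top evec_def)
lemma sv3: "1 \<le> n \<Longrightarrow> i \<in> {1..2*n} \<Longrightarrow> svec n i (n+1) = 1"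
  by (erule svec_cases, assumption) (simp_all add: svec_lt svec_eq svec_mid svec_top evec_def)

lemma sum_split2n:
  fixes n :: nat
  shows "(\<Sum>i\<in>{1..2*n}. f i) = (\<Sum>k\<in>{1..n}. f k + f (n+k))"
proof -
  have "(\<Sum>i\<in>{1..2*n}. f i) = (\<Sum>i\<in>{1..n+n}. f i)" by (simp add: mult_2)
  also have "\<dots> = (\<Sum>i\<in>{1..n}. f i) + (\<Sum>i\<in>{n+1..n+n}. f i)"
    by (rule sum.ub_add_nat) simp
  also have "(\<Sum>i\<in>{n+1..n+n}. f i) = (\<Sum>i\<in>{1..n}. f (i + n))"
    using sum.shift_bounds_cl_nat_ivl[of f 1 n n] by (simp add: add.commute)
  finally show ?thesis by (simp add: sum.distrib add.commute)
qed

lemma te_inv1: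
  assumes n: "1 \<le> n" and a: "ks a \<subseteq> {1..2*n}"
  shows "toric_exp n a 1 = (\<Sum>i\<in>{1..n}. lk a i)"
proof -
  have "toric_exp n a 1 = (\<Sum>i\<in>{1..2*n}. lk a i * svec n i 1)" by (rule te_sup[OF _ a]) simp
  also have "\<dots> = (\<Sum>i\<in>{1..2*n}. if i \<le> n then lk a i else 0)"
  proof (rule sum.cong[OF refl])
    fix i assume "i \<in> {1..2*n}" then show "lk a i * svec n i 1 = (if i \<le> n then lk a i else 0)"
      using sv1[OF n] by simp
  qed
  also have "\<dots> = (\<Sum>i\<in>{i\<in>{1..2*n}. i \<le> n}. lk a i)"
    by (rule sum.inter_filter[symmetric]) simp
  also have "{i\<in>{1..2*n}. i \<le> n} = {1..n}" by auto
  finally show ?thesis .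
qed

lemma te_inv2:
  assumes n: "1 \<le> n" and a: "ks a \<subseteq> {1..2*n}" and k: "k \<in> {1..<n}"
  shows "toric_exp n a (k+1) = lk a k + lk a (n+k)"
proof -
  have "toric_exp n a (k+1) = (\<Sum>i\<in>{1..2*n}. lk a i * svec n i (k+1))" by (rule te_sup[OF _ a]) simp
  also have "\<dots> = (\<Sum>i\<in>{1..2*n}. (if i = k then lk a i else 0) + (if i = n+k then lk a i else 0))"
  proof (rule sum.cong[OF refl])
    fix i assume "i \<in> {1..2*n}" then show "lk a i * svec n i (k+1) = (if i = k then lk a i else 0) + (if i = n+k then lk a i else 0)"
      using sv2[OF n _ k] by simp
  qed
  also have "\<dots> = lk a k + lk a (n+k)"
    using k by (simp add: sum.distrib)
  finally show ?thesis .
qed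

lemma te_inv3:
  assumes n: "1 \<le> n" and a: "ks a \<subseteq> {1..2*n}"
  shows "toric_exp n a (n+1) = (\<Sum>k\<in>{1..n}. lk a k + lk a (n+k))"
proof -
  have "toric_exp n a (n+1) = (\<Sum>i\<in>{1..2*n}. lk a i * svec n i (n+1))" by (rule te_sup[OF _ a]) simp
  also have "\<dots> = (\<Sum>i\<in>{1..2*n}. lk a i)"
  proof (rule sum.cong[OF refl])
    fix i assume "i \<in> {1..2*n}" then show "lk a i * svec n i (n+1) = lk a i"
      using sv3[OF n] by simp
  qed
  also have "\<dots> = (\<Sum>k\<in>{1..n}. lk a k + lk a (n+k))" by (rule sum_split2n)
  finally show ?thesis .
qed

lemma fiber_inv:
  assumes n: "1 \<le> n" and g: "ks g \<subseteq> {1..2*n}" and x: "ks x \<subseteq> {1..2*n}"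
    and e: "toric_exp n g = toric_exp n x"
  shows "(\<Sum>i\<in>{1..n}. lk g i) = (\<Sum>i\<in>{1..n}. lk x i)"
    and "\<forall>k\<in>{1..n}. lk g k + lk g (n+k) = lk x k + lk x (n+k)"
proof -
  show "(\<Sum>i\<in>{1..n}. lk g i) = (\<Sum>i\<in>{1..n}. lk x i)"
    using te_inv1[OF n g] te_inv1[OF n x] e by metis
  have lt: "\<forall>k\<in>{1..<n}. lk g k + lk g (n+k) = lk x k + lk x (n+k)"
    using te_inv2[OF n g] te_inv2[OF n x] e by metis
  have "(\<Sum>k\<in>{1..n}. lk g k + lk g (n+k)) = (\<Sum>k\<in>{1..n}. lk x k + lk x (n+k))"
    using te_inv3[OF n g] te_inv3[OF n x] e by metis
  moreover have "{1..n} = insert n {1..<n}" using n by auto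
  ultimately have "(\<Sum>k\<in>{1..<n}. lk g k + lk g (n+k)) + (lk g n + lk g (n+n))
     = (\<Sum>k\<in>{1..<n}. lk x k + lk x (n+k)) + (lk x n + lk x (n+n))"
    by (simp add: add.commute)
  moreover have "(\<Sum>k\<in>{1..<n}. lk g k + lk g (n+k)) = (\<Sum>k\<in>{1..<n}. lk x k + lk x (n+k))"
    using lt by (intro sum.cong) auto
  ultimately have "lk g n + lk g (n+n) = lk x n + lk x (n+n)" by simp
  then show "\<forall>k\<in>{1..n}. lk g k + lk g (n+k) = lk x k + lk x (n+k)"
    using lt by (metis atLeastAtMost_iff atLeastLessThan_iff le_neq_implies_less)
qed



definition bad :: "nat \<Rightarrow> (nat \<Rightarrow> nat) \<Rightarrow> mon \<Rightarrow> bool" where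
  "bad n \<pi> m \<longleftrightarrow> (\<exists>i\<in>{1..n}. \<exists>j\<in>{1..n}. \<pi> j < \<pi> i \<and> lk m i \<noteq> 0 \<and> lk m (n+j) \<noteq> 0)"

lemma uniq_aux:
  fixes p q p' q' \<pi> :: "nat \<Rightarrow> nat"
  assumes \<pi>: "inj_on \<pi> {1..n}"
  and nb: "\<forall>i\<in>{1..n}. \<forall>j\<in>{1..n}. \<pi> j < \<pi> i \<longrightarrow> p i = 0 \<or> q j = 0"
  and c: "\<forall>k\<in>{1..n}. p k + q k = p' k + q' k"
  and k: "k \<in> {1..n}" "p k < p' k"
  and mn: "\<forall>j\<in>{1..n}. \<pi> j < \<pi> k \<longrightarrow> p j = p' j"
  shows "(\<Sum>i\<in>{1..n}. p i) < (\<Sum>i\<in>{1..n}. p' i)"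
proof (rule sum_strict_mono_ex1)
  show "finite {1..n}" by simp
  show "\<forall>i\<in>{1..n}. p i \<le> p' i"
  proof
    fix i assume i: "i \<in> {1..n}"
    have "\<pi> i < \<pi> k \<or> i = k \<or> \<pi> k < \<pi> i"
      using inj_onD[OF \<pi> _ i k(1)] less_linear[of "\<pi> i" "\<pi> k"] by blast
    moreover have "q k \<noteq> 0" using c k by fastforce
    ultimately show "p i \<le> p' i" using mn i k nb by fastforce
  qed
  show "\<exists>a\<in>{1..n}. p a < p' a" using k by blast
qed

lemma uniq_fun:
  fixes p q p' q' \<pi> :: "nat \<Rightarrow> nat"
  assumes \<pi>: "inj_on \<pi> {1..n}"
  and nb: "\<forall>i\<in>{1..n}. \<forall>j\<in>{1..n}. \<pi> j < \<pi> i \<longrightarrow> p i = 0 \<or> q j = 0"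
  and nb': "\<forall>i\<in>{1..n}. \<forall>j\<in>{1..n}. \<pi> j < \<pi> i \<longrightarrow> p' i = 0 \<or> q' j = 0"
  and c: "\<forall>k\<in>{1..n}. p k + q k = p' k + q' k"
  and s: "(\<Sum>i\<in>{1..n}. p i) = (\<Sum>i\<in>{1..n}. p' i)"
  shows "\<forall>k\<in>{1..n}. p k = p' k"
proof (rule ccontr)
  assume "\<not> (\<forall>k\<in>{1..n}. p k = p' k)"
  then obtain k0 where k0: "k0 \<in> {1..n} \<and> p k0 \<noteq> p' k0" by blast
  obtain k where k: "k \<in> {1..n} \<and> p k \<noteq> p' k"
     and km: "\<forall>j. j \<in> {1..n} \<and> p j \<noteq> p' j \<longrightarrow> \<pi> k \<le> \<pi> j"
    using ex_has_least_nat[of "\<lambda>k. k \<in> {1..n} \<and> p k \<noteq> p' k", OF k0, of \<pi>] by blast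
  have mn: "\<forall>j\<in>{1..n}. \<pi> j < \<pi> k \<longrightarrow> p j = p' j" using km by force
  have c': "\<forall>k\<in>{1..n}. p' k + q' k = p k + q k" using c by simp
  have mn': "\<forall>j\<in>{1..n}. \<pi> j < \<pi> k \<longrightarrow> p' j = p j" using mn by simp
  show False
  proof (cases "p k < p' k")
    case True
    then show False using uniq_aux[OF \<pi> nb c _ True mn] k s by simp
  next
    case False
    then have "p' k < p k" using k by simp
    then show False using uniq_aux[OF \<pi> nb' c' _ _ mn'] k s by simp
  qed
qed

lemma nobad_iff: "\<not> bad n \<pi> m \<longleftrightarrow> (\<forall>i\<in>{1..n}. \<forall>j\<in>{1..n}. \<pi> j < \<pi> i \<longrightarrow> lk m i = 0 \<or> lk m (n+j) = 0)"
  unfolding bad_def by auto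

lemma uniq_mon:
  fixes \<pi> :: "nat \<Rightarrow> nat"
  assumes n: "1 \<le> n" and \<pi>: "inj_on \<pi> {1..n}"
    and g: "ks g \<subseteq> {1..2*n}" and x: "ks x \<subseteq> {1..2*n}"
    and e: "toric_exp n g = toric_exp n x"
    and bg: "\<not> bad n \<pi> g" and bx: "\<not> bad n \<pi> x"
  shows "g = x"
proof -
  note fi = fiber_inv[OF n g x e]
  have a: "\<forall>k\<in>{1..n}. lk g k = lk x k"
    by (rule uniq_fun[OF \<pi> _ _ fi(2) fi(1)]) (use bg bx in \<open>simp_all add: nobad_iff\<close>)
  show ?thesis
  proof (rule poly_mapping_eqI)
    fix k
    show "lk g k = lk x k"
    proof (cases "k \<in> {1..2*n}")
      case True
      show ?thesis
      proof (cases "k \<le> n")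
        case True
        then show ?thesis using a \<open>k \<in> {1..2*n}\<close> by simp
      next
        case False
        then obtain j where j: "k = n + j" "j \<in> {1..n}" using \<open>k \<in> {1..2*n}\<close>
          by (metis add.commute atLeastAtMost_iff le_add_diff_inverse2 mult_2 nat_add_left_cancel_le nat_le_linear not_less_eq_eq plus_1_eq_Suc)
        then show ?thesis using a fi(2) by fastforce
      qed
    next
      case False
      then have "k \<notin> ks g" "k \<notin> ks x" using g x by auto
      then show ?thesis by (simp add: in_keys_iff)
    qed
  qed
qed



definition Rw :: "(mon \<Rightarrow> mon \<Rightarrow> bool) \<Rightarrow> nat \<Rightarrow> (nat \<Rightarrow>\<^sub>0 real) \<Rightarrow> nat \<Rightarrow> nat \<Rightarrow> bool" where
  "Rw ord n w i j \<longleftrightarrow> ltw ord w (sg j 1 + sg (n+i) 1) (sg i 1 + sg (n+j) 1)"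

definition agree :: "(mon \<Rightarrow> mon \<Rightarrow> bool) \<Rightarrow> nat \<Rightarrow> (nat \<Rightarrow>\<^sub>0 real) \<Rightarrow> (nat \<Rightarrow> nat) \<Rightarrow> bool" where
  "agree ord n w \<pi> \<longleftrightarrow> (\<forall>i\<in>{1..n}. \<forall>j\<in>{1..n}. i \<noteq> j \<longrightarrow> (Rw ord n w i j \<longleftrightarrow> \<pi> j < \<pi> i))"

definition mu :: "nat \<Rightarrow> (nat \<Rightarrow> nat) \<Rightarrow> mon \<Rightarrow> nat" where
  "mu n \<pi> x = (\<Sum>i\<in>{1..n}. \<pi> i * lk x i)"

lemma mu_add: "mu n \<pi> (a + b) = mu n \<pi> a + mu n \<pi> b"
  unfolding mu_def by (simp add: lookup_add sum.distrib distrib_left)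

lemma mu_single1: "i \<in> {1..n} \<Longrightarrow> mu n \<pi> (sg i 1) = \<pi> i"
proof -
  assume i: "i \<in> {1..n}"
  have e: "(\<lambda>t. \<pi> t * lk (sg i 1) t) = (\<lambda>t. if t = i then \<pi> t else 0)"
    by (auto simp: lookup_single when_def)
  show ?thesis unfolding mu_def e using i by (simp add: sum.delta)
qed

lemma mu_single2: "1 \<le> j \<Longrightarrow> mu n \<pi> (sg (n+j) 1) = 0"
proof -
  assume j: "1 \<le> j"
  have e: "(\<lambda>t. \<pi> t * lk (sg (n+j) 1) t) = (\<lambda>t. if t = n+j then \<pi> t else 0)"
    by (auto simp: lookup_single when_def)
  show ?thesis unfolding mu_def e using j by (simp add: sum.delta)
qed

lemma decomp2:
  fixes x :: mon
  assumes "lk x i \<noteq> 0" "lk x k \<noteq> 0" "i \<noteq> k"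
  shows "\<exists>y. x = y + sg i 1 + sg k 1 \<and> ks y \<subseteq> ks x"
proof -
  let ?y = "x - sg i 1 - sg k 1"
  have eq: "x = ?y + sg i 1 + sg k 1"
  proof (rule poly_mapping_eqI)
    fix t show "lk x t = lk (?y + sg i 1 + sg k 1) t"
      using assms by (cases "t = i"; cases "t = k") (simp_all add: lookup_add lookup_minus lookup_single when_def)
  qed
  have "ks ?y \<subseteq> ks x"
  proof
    fix t assume "t \<in> ks ?y"
    then have "lk ?y t \<noteq> 0" by (simp add: in_keys_iff)
    then show "t \<in> ks x" by (simp add: in_keys_iff lookup_minus)
  qed
  then show ?thesis using eq by blast
qed

lemma keys_swap:
  fixes y :: mon
  assumes "ks y \<subseteq> {1..2*n}" "i \<in> {1..n}" "j \<in> {1..n}"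
  shows "ks (y + sg j 1 + sg (n+i) 1) \<subseteq> {1..2*n}"
proof
  fix t assume "t \<in> ks (y + sg j 1 + sg (n+i) 1)"
  then have "t \<in> ks (y + sg j (1::nat)) \<union> ks (sg (n+i) (1::nat))" by (rule keys_add_sub)
  then have "t \<in> ks y \<union> ks (sg j (1::nat)) \<union> ks (sg (n+i) (1::nat))" using keys_add_sub[of t y "sg j (1::nat)"] by blast
  then have "t \<in> ks y \<or> t = j \<or> t = n + i" by auto
  then show "t \<in> {1..2*n}" using assms by auto
qed

lemma swap_lt:
  assumes mo: "monomial_order ord" and ag: "agree ord n w \<pi>"
    and ij: "i \<in> {1..n}" "j \<in> {1..n}" "\<pi> j < \<pi> i"
  shows "ltw ord w (y + sg j 1 + sg (n+i) 1) (y + sg i 1 + sg (n+j) 1)"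
proof -
  have "i \<noteq> j" using ij by auto
  then have "Rw ord n w i j" using ag ij unfolding agree_def by blast
  then have "ltw ord w (sg j 1 + sg (n+i) 1 + y) (sg i 1 + sg (n+j) 1 + y)"
    unfolding Rw_def by (rule ltw_add[OF mo])
  then show ?thesis by (simp add: ac_simps)
qed

lemma greedy_min:
  fixes \<pi> :: "nat \<Rightarrow> nat"
  assumes mo: "monomial_order ord" and n: "1 \<le> n" and \<pi>: "inj_on \<pi> {1..n}"
    and ag: "agree ord n w \<pi>"
    and g: "ks g \<subseteq> {1..2*n}" and bg: "\<not> bad n \<pi> g"
  shows "ks x \<subseteq> {1..2*n} \<Longrightarrow> toric_exp n x = toric_exp n g \<Longrightarrow> lew ord w g x"
proof (induction "mu n \<pi> x" arbitrary: x rule: less_induct)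
  case less
  show ?case
  proof (cases "bad n \<pi> x")
    case False
    have "g = x" using uniq_mon[OF n \<pi> g less.prems(1) less.prems(2)[symmetric] bg False] .
    then show ?thesis using lew_refl[OF mo] by simp
  next
    case True
    then obtain i j where ij: "i \<in> {1..n}" "j \<in> {1..n}" "\<pi> j < \<pi> i" "lk x i \<noteq> 0" "lk x (n+j) \<noteq> 0"
      unfolding bad_def by blast
    have "i \<noteq> n + j" using ij by auto
    then obtain y where y: "x = y + sg i 1 + sg (n+j) 1" "ks y \<subseteq> ks x"
      using decomp2[OF ij(4,5)] by blast
    let ?x' = "y + sg j 1 + sg (n+i) 1"
    have ky: "ks y \<subseteq> {1..2*n}" using y(2) less.prems(1) by blast
    have k': "ks ?x' \<subseteq> {1..2*n}" by (rule keys_swap[OF ky ij(1,2)])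
    have te': "toric_exp n ?x' = toric_exp n g"
      using te_swap[OF n ij(1,2), of y] y(1) less.prems(2) by simp
    have "mu n \<pi> ?x' < mu n \<pi> x"
      using ij y(1) by (simp add: mu_add mu_single1 mu_single2)
    then have "lew ord w g ?x'" using less.hyps k' te' by blast
    moreover have "ltw ord w ?x' x" using swap_lt[OF mo ag ij(1,2,3)] y(1) by simp
    ultimately show ?thesis using lew_trans[OF mo] ltw_lew by blast
  qed
qed



abbreviation gens where "gens ord n w \<equiv> {init_form ord w f | f. f \<in> toric_ideal n \<and> f \<noteq> 0}"

lemma lm_bad:
  fixes \<pi> :: "nat \<Rightarrow> nat"
  assumes mo: "monomial_order ord" and n: "1 \<le> n" and \<pi>: "inj_on \<pi> {1..n}"
    and ag: "agree ord n w \<pi>" and f: "f \<in> toric_ideal n" "f \<noteq> 0"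
  shows "bad n \<pi> (init_mon ord w f) \<and> ks (init_mon ord w f) \<subseteq> {1..2*n}"
proof -
  let ?m = "init_mon ord w f"
  note sp = init_mon_spec[OF mo f(2), of w]
  have fr: "f \<in> poly_ring (2*n)" and tz: "\<forall>b. toric_image_coeff n f b = 0"
    using f(1) unfolding toric_ideal_def by auto
  have km: "ks ?m \<subseteq> {1..2*n}" using fr sp unfolding poly_ring_def by blast
  let ?F = "{a \<in> ks f. toric_exp n a = toric_exp n ?m}"
  have "\<exists>m'\<in>?F. m' \<noteq> ?m"
  proof (rule ccontr)
    assume "\<not> (\<exists>m'\<in>?F. m' \<noteq> ?m)"
    then have "?F = {?m}" using sp by auto
    then have "toric_image_coeff n f (toric_exp n ?m) = lk f ?m" unfolding toric_image_coeff_def by simp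
    moreover have "lk f ?m \<noteq> 0" using sp by (simp add: in_keys_iff)
    ultimately show False using tz by simp
  qed
  then obtain m' where m': "m' \<in> ks f" "toric_exp n m' = toric_exp n ?m" "m' \<noteq> ?m" by blast
  have "bad n \<pi> ?m"
  proof (rule ccontr)
    assume nb: "\<not> bad n \<pi> ?m"
    have k': "ks m' \<subseteq> {1..2*n}" using fr m'(1) unfolding poly_ring_def by blast
    have "lew ord w ?m m'" by (rule greedy_min[OF mo n \<pi> ag km nb k' m'(2)])
    moreover have "lew ord w m' ?m" using sp m' by blast
    ultimately show False using lew_antisym[OF mo] m'(3) by blast
  qed
  then show ?thesis using km by blast
qed

lemma bad_gen:
  fixes \<pi> :: "nat \<Rightarrow> nat" and c :: complex
  assumes mo: "monomial_order ord" and n: "1 \<le> n" and ag: "agree ord n w \<pi>"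
    and m: "ks m \<subseteq> {1..2*n}" "bad n \<pi> m" and c: "c \<noteq> 0"
  shows "sg m c \<in> gens ord n w"
proof -
  obtain i j where ij: "i \<in> {1..n}" "j \<in> {1..n}" "\<pi> j < \<pi> i" "lk m i \<noteq> 0" "lk m (n+j) \<noteq> 0"
    using m(2) unfolding bad_def by blast
  have "i \<noteq> n + j" using ij by auto
  then obtain y where y: "m = y + sg i 1 + sg (n+j) 1" "ks y \<subseteq> ks m"
    using decomp2[OF ij(4,5)] by blast
  let ?m' = "y + sg j 1 + sg (n+i) 1"
  have lt: "ltw ord w ?m' m" using swap_lt[OF mo ag ij(1,2,3)] y(1) by simp
  then have ne: "?m' \<noteq> m" by (simp add: ltw_def)
  have km': "ks ?m' \<subseteq> {1..2*n}" by (rule keys_swap) (use y(2) m(1) ij in auto)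
  have te: "toric_exp n ?m' = toric_exp n m" using te_swap[OF n ij(1,2), of y] y(1) by simp
  define f :: cpoly where "f = sg m c - sg ?m' c"
  have lf: "\<And>a. lk f a = (if a = m then c else if a = ?m' then -c else 0)"
    unfolding f_def using ne by (auto simp: lookup_minus lookup_single when_def)
  have kf: "ks f = {m, ?m'}"
  proof
    show "ks f \<subseteq> {m, ?m'}" by (auto simp: in_keys_iff lf split: if_splits)
    show "{m, ?m'} \<subseteq> ks f" using c ne by (auto simp: in_keys_iff lf)
  qed
  have fI: "f \<in> toric_ideal n"
    unfolding toric_ideal_def
  proof (intro CollectI conjI allI)
    show "f \<in> poly_ring (2*n)" unfolding poly_ring_def using kf m(1) km' by auto
    fix b
    show "toric_image_coeff n f b = 0"
    proof (cases "toric_exp n m = b")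
      case True
      then have e: "{a \<in> ks f. toric_exp n a = b} = {m, ?m'}" using kf te by auto
      have "sum (lk f) {m, ?m'} = lk f m + lk f ?m'" using ne by simp
      also have "\<dots> = 0" using ne by (simp add: lf)
      finally show ?thesis unfolding toric_image_coeff_def e .
    next
      case False
      then have e: "{a \<in> ks f. toric_exp n a = b} = {}" using kf te by auto
      show ?thesis unfolding toric_image_coeff_def e by (rule sum.empty)
    qed
  qed
  have f0: "f \<noteq> 0" using lf[of m] c by auto
  have im: "init_mon ord w f = m"
    by (rule init_mon_eq[OF mo]) (use kf lt in \<open>auto simp: ltw_def\<close>)
  have "init_form ord w f = sg m c" unfolding init_form_def im lf by simp
  then have "\<exists>g. sg m c = init_form ord w g \<and> g \<in> toric_ideal n \<and> g \<noteq> 0" using fI f0 by metis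
  then show ?thesis by simp
qed



lemma gens_sub:
  fixes \<pi> :: "nat \<Rightarrow> nat"
  assumes mo: "monomial_order ord" and n: "1 \<le> n" and \<pi>: "inj_on \<pi> {1..n}"
    and ag: "agree ord n w \<pi>" and ag': "agree ord n w' \<pi>"
  shows "gens ord n w \<subseteq> gens ord n w'"
proof
  fix x assume "x \<in> gens ord n w"
  then obtain f where f: "x = init_form ord w f" "f \<in> toric_ideal n" "f \<noteq> 0" by blast
  note lb = lm_bad[OF mo n \<pi> ag f(2,3)]
  have nz: "lk f (init_mon ord w f) \<noteq> 0"
    using init_mon_spec[OF mo f(3), of w] by (simp add: in_keys_iff)
  have *: "sg (init_mon ord w f) (lk f (init_mon ord w f)) \<in> gens ord n w'"
    by (rule bad_gen[OF mo n ag' lb[THEN conjunct2] lb[THEN conjunct1] nz])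
  have "x = sg (init_mon ord w f) (lk f (init_mon ord w f))" using f(1) unfolding init_form_def .
  then show "x \<in> gens ord n w'" using * by (simp only:)
qed

lemma init_ideal_eq:
  fixes \<pi> :: "nat \<Rightarrow> nat"
  assumes mo: "monomial_order ord" and n: "1 \<le> n" and \<pi>: "inj_on \<pi> {1..n}"
    and ag: "agree ord n w \<pi>" and ag': "agree ord n w' \<pi>"
  shows "init_ideal ord (2*n) w (toric_ideal n) = init_ideal ord (2*n) w' (toric_ideal n)"
proof -
  have "gens ord n w = gens ord n w'"
    using gens_sub[OF mo n \<pi> ag ag'] gens_sub[OF mo n \<pi> ag' ag] by (rule subset_antisym)
  then show ?thesis unfolding init_ideal_def by (simp only:)
qed



definition Jid :: "nat \<Rightarrow> (nat \<Rightarrow> nat) \<Rightarrow> cpoly set" where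
  "Jid n \<pi> = {p \<in> poly_ring (2*n). \<forall>a\<in>ks p. bad n \<pi> a}"

lemma bad_mono: "bad n \<pi> a \<Longrightarrow> bad n \<pi> (b + a)"
  unfolding bad_def by (auto simp: lookup_add)

lemma poly_ring_keys_add: "ks a \<subseteq> {1..m} \<Longrightarrow> ks b \<subseteq> {1..m} \<Longrightarrow> ks (a + b) \<subseteq> {1..m}"
  using keys_add[of a b] by blast

lemma Jid_ideal: "is_ideal (2*n) (Jid n \<pi>)"
  unfolding is_ideal_def
proof (intro conjI ballI)
  show "Jid n \<pi> \<subseteq> poly_ring (2*n)" unfolding Jid_def by blast
  show "0 \<in> Jid n \<pi>" unfolding Jid_def poly_ring_def by simp
next
  fix x y assume x: "x \<in> Jid n \<pi>" and y: "y \<in> Jid n \<pi>"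
  show "x + y \<in> Jid n \<pi>"
    unfolding Jid_def poly_ring_def
  proof (intro CollectI conjI ballI)
    fix a assume "a \<in> ks (x + y)"
    then have "a \<in> ks x \<union> ks y" by (rule keys_add_sub)
    then show "ks a \<subseteq> {1..2*n}" "bad n \<pi> a" using x y unfolding Jid_def poly_ring_def by blast+
  qed
next
  fix r x assume r: "r \<in> poly_ring (2*n)" and x: "x \<in> Jid n \<pi>"
  show "r * x \<in> Jid n \<pi>"
    unfolding Jid_def poly_ring_def
  proof (intro CollectI conjI ballI)
    fix a assume "a \<in> ks (r * x)"
    then obtain b c where bc: "a = b + c" "b \<in> ks r" "c \<in> ks x" using keys_mult[of r x] by blast
    have "ks b \<subseteq> {1..2*n}" using r bc unfolding poly_ring_def by blast
    moreover have "ks c \<subseteq> {1..2*n}" "bad n \<pi> c" using x bc unfolding Jid_def poly_ring_def by blast+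
    ultimately show "ks a \<subseteq> {1..2*n}" "bad n \<pi> a" using bc(1) poly_ring_keys_add bad_mono by blast+
  qed
qed

lemma gens_in_J:
  fixes \<pi> :: "nat \<Rightarrow> nat"
  assumes mo: "monomial_order ord" and n: "1 \<le> n" and \<pi>: "inj_on \<pi> {1..n}"
    and ag: "agree ord n w \<pi>"
  shows "gens ord n w \<subseteq> Jid n \<pi>"
proof
  fix x assume "x \<in> gens ord n w"
  then obtain f where f: "x = init_form ord w f" "f \<in> toric_ideal n" "f \<noteq> 0" by blast
  note lb = lm_bad[OF mo n \<pi> ag f(2,3)]
  have x: "x = sg (init_mon ord w f) (lk f (init_mon ord w f))" using f(1) unfolding init_form_def .
  have "ks x \<subseteq> {init_mon ord w f}" unfolding x by simp
  then show "x \<in> Jid n \<pi>" unfolding Jid_def poly_ring_def using lb by blast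
qed

lemma init_ideal_sub_J:
  fixes \<pi> :: "nat \<Rightarrow> nat"
  assumes mo: "monomial_order ord" and n: "1 \<le> n" and \<pi>: "inj_on \<pi> {1..n}"
    and ag: "agree ord n w \<pi>"
  shows "init_ideal ord (2*n) w (toric_ideal n) \<subseteq> Jid n \<pi>"
  unfolding init_ideal_def ideal_gen_def
  by (rule Inter_lower) (use Jid_ideal gens_in_J[OF mo n \<pi> ag] in blast)

lemma gens_in_init: "gens ord n w \<subseteq> init_ideal ord (2*n) w (toric_ideal n)"
  unfolding init_ideal_def ideal_gen_def by blast

lemma perm_rank:
  fixes \<pi> :: "nat \<Rightarrow> nat"
  assumes p: "\<pi> permutes {1..n}" and i: "i \<in> {1..n}"
  shows "card {j\<in>{1..n}. \<pi> j < \<pi> i} = \<pi> i - 1"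
proof -
  have pi: "\<pi> i \<in> {1..n}" using permutes_in_image[OF p] i by blast
  have "\<pi> ` {j\<in>{1..n}. \<pi> j < \<pi> i} = {k\<in>\<pi> ` {1..n}. k < \<pi> i}" by blast
  also have "\<dots> = {k\<in>{1..n}. k < \<pi> i}" using permutes_image[OF p] by simp
  also have "\<dots> = {1..<\<pi> i}" using pi by auto
  finally have e: "\<pi> ` {j\<in>{1..n}. \<pi> j < \<pi> i} = {1..<\<pi> i}" .
  have "card {j\<in>{1..n}. \<pi> j < \<pi> i} = card (\<pi> ` {j\<in>{1..n}. \<pi> j < \<pi> i})"
    by (rule card_image[symmetric]) (rule permutes_inj_on[OF p])
  also have "\<dots> = \<pi> i - 1" unfolding e by simp
  finally show ?thesis .
qed

lemma perm_order_eq: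
  fixes \<pi> \<sigma> :: "nat \<Rightarrow> nat"
  assumes p: "\<pi> permutes {1..n}" and s: "\<sigma> permutes {1..n}"
    and h: "\<forall>i\<in>{1..n}. \<forall>j\<in>{1..n}. \<pi> j < \<pi> i \<longrightarrow> \<sigma> j < \<sigma> i"
  shows "\<pi> = \<sigma>"
proof
  fix i
  show "\<pi> i = \<sigma> i"
  proof (cases "i \<in> {1..n}")
    case False
    then show ?thesis using permutes_not_in[OF p] permutes_not_in[OF s] by metis
  next
    case True
    have "{j\<in>{1..n}. \<pi> j < \<pi> i} = {j\<in>{1..n}. \<sigma> j < \<sigma> i}"
    proof (intro Collect_cong conj_cong refl iffI)
      fix j assume j: "j \<in> {1..n}"
      show "\<pi> j < \<pi> i \<Longrightarrow> \<sigma> j < \<sigma> i" using h j True by blast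
      assume sj: "\<sigma> j < \<sigma> i"
      show "\<pi> j < \<pi> i"
      proof (rule ccontr)
        assume "\<not> \<pi> j < \<pi> i"
        moreover have "j \<noteq> i" using sj by auto
        then have "\<pi> j \<noteq> \<pi> i" using permutes_inj_on[OF p] j True by (meson inj_onD)
        ultimately have "\<pi> i < \<pi> j" by simp
        then have "\<sigma> i < \<sigma> j" using h j True by blast
        then show False using sj by simp
      qed
    qed
    then have "\<pi> i - 1 = \<sigma> i - 1" using perm_rank[OF p True] perm_rank[OF s True] by simp
    moreover have "\<pi> i \<in> {1..n}" "\<sigma> i \<in> {1..n}"
      using permutes_in_image[OF p] permutes_in_image[OF s] True by blast+
    ultimately show ?thesis by auto
  qed
qed

lemma init_ideal_inj:
  fixes \<pi> \<sigma> :: "nat \<Rightarrow> nat"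
  assumes mo: "monomial_order ord" and n: "1 \<le> n"
    and p: "\<pi> permutes {1..n}" and s: "\<sigma> permutes {1..n}"
    and ag: "agree ord n w \<pi>" and ag': "agree ord n w' \<sigma>" and ne: "\<pi> \<noteq> \<sigma>"
  shows "init_ideal ord (2*n) w (toric_ideal n) \<noteq> init_ideal ord (2*n) w' (toric_ideal n)"
proof
  assume eq: "init_ideal ord (2*n) w (toric_ideal n) = init_ideal ord (2*n) w' (toric_ideal n)"
  obtain i j where ij: "i \<in> {1..n}" "j \<in> {1..n}" "\<pi> j < \<pi> i" "\<not> \<sigma> j < \<sigma> i"
    using perm_order_eq[OF p s] ne by blast
  let ?m = "sg i 1 + sg (n+j) 1 :: mon"
  have lm1: "lk ?m i = 1" using ij by (simp add: lookup_add lookup_single when_def)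
  have lm2: "lk ?m (n+j) = 1" using ij by (simp add: lookup_add lookup_single when_def)
  have bm: "bad n \<pi> ?m" unfolding bad_def using ij lm1 lm2 by fastforce
  have km: "ks ?m \<subseteq> {1..2*n}"
  proof
    fix t assume "t \<in> ks ?m"
    then have "t \<in> ks (sg i (1::nat)) \<union> ks (sg (n+j) (1::nat))" by (rule keys_add_sub)
    then show "t \<in> {1..2*n}" using ij by auto
  qed
  have nbm: "\<not> bad n \<sigma> ?m"
  proof
    assume "bad n \<sigma> ?m"
    then obtain k l where kl: "k \<in> {1..n}" "l \<in> {1..n}" "\<sigma> l < \<sigma> k" "lk ?m k \<noteq> 0" "lk ?m (n+l) \<noteq> 0"
      unfolding bad_def by blast
    have "k = i" using kl(1,4) ij by (auto simp: lookup_add lookup_single when_def split: if_splits)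
    moreover have "l = j" using kl(2,5) ij by (auto simp: lookup_add lookup_single when_def split: if_splits)
    ultimately show False using kl(3) ij(4) by simp
  qed
  have "sg ?m 1 \<in> gens ord n w" by (rule bad_gen[OF mo n ag km bm]) simp
  then have "sg ?m 1 \<in> init_ideal ord (2*n) w' (toric_ideal n)" using gens_in_init eq by blast
  then have "sg ?m 1 \<in> Jid n \<sigma>"
    using init_ideal_sub_J[OF mo n permutes_inj_on[OF s] ag'] by blast
  then have "bad n \<sigma> ?m" unfolding Jid_def by simp
  then show False using nbm by simp
qed



lemma Rw_irrefl: "\<not> Rw ord n w i i"
  unfolding Rw_def ltw_def by simp

lemma pair_ne:
  assumes "i \<in> {1..n}" "j \<in> {1..n}" "i \<noteq> j"
  shows "(sg j 1 + sg (n+i) 1 :: mon) \<noteq> sg i 1 + sg (n+j) 1"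
proof
  assume "(sg j 1 + sg (n+i) 1 :: mon) = sg i 1 + sg (n+j) 1"
  then have "lk (sg j 1 + sg (n+i) 1 :: mon) i = lk (sg i 1 + sg (n+j) 1 :: mon) i" by simp
  then show False using assms by (simp add: lookup_add lookup_single when_def)
qed

lemma Rw_total:
  assumes mo: "monomial_order ord" and "i \<in> {1..n}" "j \<in> {1..n}" "i \<noteq> j"
  shows "Rw ord n w i j \<or> Rw ord n w j i"
  unfolding Rw_def using ltw_total[OF mo pair_ne[OF assms(2-4)]] by blast

lemma Rw_asym:
  assumes mo: "monomial_order ord" and "Rw ord n w i j"
  shows "\<not> Rw ord n w j i"
  using assms unfolding Rw_def using ltw_not[OF mo] ltw_lew by blast

lemma Rw_trans:
  assumes mo: "monomial_order ord" and h1: "Rw ord n w i j" and h2: "Rw ord n w j k"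
  shows "Rw ord n w i k"
proof -
  let ?aj = "sg j 1 :: mon" and ?ai = "sg i 1 :: mon" and ?ak = "sg k 1 :: mon"
  let ?bi = "sg (n+i) 1 :: mon" and ?bj = "sg (n+j) 1 :: mon" and ?bk = "sg (n+k) 1 :: mon"
  have "ltw ord w (?aj + ?bi + (?ak + ?bj)) (?ai + ?bj + (?ak + ?bj))"
    using h1 unfolding Rw_def by (rule ltw_add[OF mo])
  moreover have "ltw ord w (?ak + ?bj + (?ai + ?bj)) (?aj + ?bk + (?ai + ?bj))"
    using h2 unfolding Rw_def by (rule ltw_add[OF mo])
  ultimately have "ltw ord w (?aj + ?bi + (?ak + ?bj)) (?aj + ?bk + (?ai + ?bj))"
    using ltw_trans[OF mo] by (simp add: ac_simps)
  moreover have "?aj + ?bi + (?ak + ?bj) = (?ak + ?bi) + (?aj + ?bj)" by (simp add: ac_simps)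
  moreover have "?aj + ?bk + (?ai + ?bj) = (?ai + ?bk) + (?aj + ?bj)" by (simp add: ac_simps)
  ultimately have "ltw ord w ((?ak + ?bi) + (?aj + ?bj)) ((?ai + ?bk) + (?aj + ?bj))" by simp
  then show ?thesis unfolding Rw_def by (rule ltw_cancel[OF mo])
qed

lemma agree_exists:
  assumes mo: "monomial_order ord" and n: "1 \<le> n"
  shows "\<exists>\<pi>. \<pi> permutes {1..n} \<and> agree ord n w \<pi>"
proof -
  let ?R = "Rw ord n w"
  define \<pi> where "\<pi> i = (if i \<in> {1..n} then Suc (card {j\<in>{1..n}. ?R i j}) else i)" for i
  have key: "\<pi> j < \<pi> i" if ij: "i \<in> {1..n}" "j \<in> {1..n}" "?R i j" for i j
  proof -
    have "{k\<in>{1..n}. ?R j k} \<subset> {k\<in>{1..n}. ?R i k}"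
    proof
      show "{k\<in>{1..n}. ?R j k} \<subseteq> {k\<in>{1..n}. ?R i k}" using Rw_trans[OF mo ij(3)] by blast
      have "j \<in> {k\<in>{1..n}. ?R i k}" "j \<notin> {k\<in>{1..n}. ?R j k}" using ij Rw_irrefl by auto
      then show "{k\<in>{1..n}. ?R j k} \<noteq> {k\<in>{1..n}. ?R i k}" by blast
    qed
    then have "card {k\<in>{1..n}. ?R j k} < card {k\<in>{1..n}. ?R i k}"
      by (rule psubset_card_mono[rotated]) simp
    then show ?thesis unfolding \<pi>_def using ij by simp
  qed
  have rng: "\<pi> i \<in> {1..n}" if i: "i \<in> {1..n}" for i
  proof -
    have "{j\<in>{1..n}. ?R i j} \<subseteq> {1..n} - {i}" using Rw_irrefl by auto
    then have "card {j\<in>{1..n}. ?R i j} \<le> card ({1..n} - {i})" by (rule card_mono[rotated]) simp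
    also have "\<dots> = n - 1" using i by simp
    finally show ?thesis unfolding \<pi>_def using i n by auto
  qed
  have inj: "inj_on \<pi> {1..n}"
  proof (rule inj_onI)
    fix i j assume ij: "i \<in> {1..n}" "j \<in> {1..n}" "\<pi> i = \<pi> j"
    show "i = j"
    proof (rule ccontr)
      assume "i \<noteq> j"
      then have "?R i j \<or> ?R j i" using Rw_total[OF mo ij(1,2)] by blast
      then show False using key ij by fastforce
    qed
  qed
  have img: "\<pi> ` {1..n} = {1..n}"
    by (rule endo_inj_surj) (use rng inj in auto)
  have perm: "\<pi> permutes {1..n}"
    by (rule bij_imp_permutes) (use inj img in \<open>auto simp: bij_betw_def \<pi>_def\<close>)
  have "agree ord n w \<pi>"
    unfolding agree_def
  proof (intro ballI impI)
    fix i j assume ij: "i \<in> {1..n}" "j \<in> {1..n}" "i \<noteq> j"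
    show "?R i j \<longleftrightarrow> \<pi> j < \<pi> i"
    proof
      assume "?R i j" then show "\<pi> j < \<pi> i" using key ij by blast
    next
      assume h: "\<pi> j < \<pi> i"
      show "?R i j"
      proof (rule ccontr)
        assume "\<not> ?R i j"
        then have "?R j i" using Rw_total[OF mo ij] by blast
        then have "\<pi> i < \<pi> j" using key ij by blast
        then show False using h by simp
      qed
    qed
  qed
  then show ?thesis using perm by blast
qed

definition dd :: "nat \<Rightarrow> (nat \<Rightarrow>\<^sub>0 real) \<Rightarrow> nat \<Rightarrow> real" where
  "dd n w i = lk w i - lk w (n+i)"

lemma mw_pair: "mweight w (sg j 1 + sg (n+i) 1) = lk w j + lk w (n+i)"
  by (simp add: mweight_add mweight_single)

lemma agree_strict:
  fixes \<pi> :: "nat \<Rightarrow> nat"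
  assumes mo: "monomial_order ord" and p: "\<pi> permutes {1..n}"
    and h: "\<forall>i\<in>{1..n}. \<forall>j\<in>{1..n}. \<pi> j < \<pi> i \<longrightarrow> dd n w j < dd n w i"
  shows "agree ord n w \<pi>"
  unfolding agree_def
proof (intro ballI impI)
  fix i j assume ij: "i \<in> {1..n}" "j \<in> {1..n}" "i \<noteq> j"
  have pne: "\<pi> i \<noteq> \<pi> j" using permutes_inj_on[OF p] ij by (meson inj_onD)
  show "Rw ord n w i j \<longleftrightarrow> \<pi> j < \<pi> i"
  proof (cases "\<pi> j < \<pi> i")
    case True
    then have "dd n w j < dd n w i" using h ij by blast
    then have "mweight w (sg j 1 + sg (n+i) 1) < mweight w (sg i 1 + sg (n+j) 1)"
      unfolding mw_pair dd_def by simp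
    then have "Rw ord n w i j" unfolding Rw_def ltw_def lew_def by auto
    then show ?thesis using True by simp
  next
    case False
    then have "\<pi> i < \<pi> j" using pne by simp
    then have "dd n w i < dd n w j" using h ij by blast
    then have "mweight w (sg i 1 + sg (n+j) 1) < mweight w (sg j 1 + sg (n+i) 1)"
      unfolding mw_pair dd_def by simp
    then have "\<not> Rw ord n w i j" unfolding Rw_def ltw_def lew_def by auto
    then show ?thesis using False by simp
  qed
qed

lemma agree_weak:
  fixes \<pi> :: "nat \<Rightarrow> nat"
  assumes ag: "agree ord n w \<pi>" and ij: "i \<in> {1..n}" "j \<in> {1..n}" "\<pi> j < \<pi> i"
  shows "dd n w j \<le> dd n w i"
proof -
  have "i \<noteq> j" using ij by auto
  then have "Rw ord n w i j" using ag ij unfolding agree_def by blast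
  then have "mweight w (sg j 1 + sg (n+i) 1) \<le> mweight w (sg i 1 + sg (n+j) 1)"
    unfolding Rw_def ltw_def lew_def by auto
  then show ?thesis unfolding mw_pair dd_def by simp
qed

lemma Rvec_iff: "x \<in> Rvec m \<longleftrightarrow> (\<forall>k. k \<notin> {1..m} \<longrightarrow> lk x k = 0)"
  unfolding Rvec_def by (auto simp: in_keys_iff)

lemma lk_pw: "lk (perm_weight n \<pi>) k =
   (if k \<in> {1..n} then real (\<pi> k) else if k \<in> {n+1..2*n} then real (n + 1 - \<pi> (k-n)) else 0)"
  unfolding perm_weight_def by (rule lk_sum_single2)

lemma pw_Rvec: "perm_weight n \<pi> \<in> Rvec (2*n)"
  unfolding Rvec_iff lk_pw by auto

lemma dd_pw:
  assumes p: "\<pi> permutes {1..n}" and i: "i \<in> {1..n}"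
  shows "dd n (perm_weight n \<pi>) i = 2 * real (\<pi> i) - real n - 1"
proof -
  have "\<pi> i \<in> {1..n}" using permutes_in_image[OF p] i by blast
  then have "real (n + 1 - \<pi> i) = real n + 1 - real (\<pi> i)" by (simp add: of_nat_diff)
  moreover have "n + i \<notin> {1..n}" "n + i \<in> {n+1..2*n}" using i by auto
  ultimately show ?thesis unfolding dd_def lk_pw using i by simp
qed

lemma pw_agree:
  assumes mo: "monomial_order ord" and p: "\<pi> permutes {1..n}"
  shows "agree ord n (perm_weight n \<pi>) \<pi>"
  by (rule agree_strict[OF mo p]) (simp add: dd_pw[OF p])



lemma init_ideals_perm:
  assumes mo: "monomial_order ord" and n: "1 \<le> n"
  shows "{init_ideal ord (2*n) w (toric_ideal n) | w. w \<in> Rvec (2*n)}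
           = {init_ideal ord (2*n) (perm_weight n \<pi>) (toric_ideal n) | \<pi>. \<pi> permutes {1..n}}"
proof (intro equalityI subsetI)
  fix I assume "I \<in> {init_ideal ord (2*n) w (toric_ideal n) | w. w \<in> Rvec (2*n)}"
  then obtain w where w: "I = init_ideal ord (2*n) w (toric_ideal n)" by blast
  obtain \<pi> where p: "\<pi> permutes {1..n}" "agree ord n w \<pi>" using agree_exists[OF mo n] by blast
  have "I = init_ideal ord (2*n) (perm_weight n \<pi>) (toric_ideal n)"
    unfolding w by (rule init_ideal_eq[OF mo n permutes_inj_on[OF p(1)] p(2) pw_agree[OF mo p(1)]])
  then show "I \<in> {init_ideal ord (2*n) (perm_weight n \<pi>) (toric_ideal n) | \<pi>. \<pi> permutes {1..n}}"
    using p(1) by blast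
next
  fix I assume "I \<in> {init_ideal ord (2*n) (perm_weight n \<pi>) (toric_ideal n) | \<pi>. \<pi> permutes {1..n}}"
  then show "I \<in> {init_ideal ord (2*n) w (toric_ideal n) | w. w \<in> Rvec (2*n)}"
    using pw_Rvec by blast
qed

lemma init_ideals_card:
  assumes mo: "monomial_order ord" and n: "1 \<le> n"
  shows "card {init_ideal ord (2*n) w (toric_ideal n) | w. w \<in> Rvec (2*n)} = fact n"
proof -
  let ?f = "\<lambda>\<pi>. init_ideal ord (2*n) (perm_weight n \<pi>) (toric_ideal n)"
  have e: "{init_ideal ord (2*n) w (toric_ideal n) | w. w \<in> Rvec (2*n)} = ?f ` {\<pi>. \<pi> permutes {1..n}}"
    unfolding init_ideals_perm[OF mo n] by blast
  have inj: "inj_on ?f {\<pi>. \<pi> permutes {1..n}}"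
  proof (rule inj_onI)
    fix \<pi> \<sigma> assume p: "\<pi> \<in> {\<pi>. \<pi> permutes {1..n}}" and s: "\<sigma> \<in> {\<pi>. \<pi> permutes {1..n}}"
      and eq: "?f \<pi> = ?f \<sigma>"
    show "\<pi> = \<sigma>"
    proof (rule ccontr)
      assume "\<pi> \<noteq> \<sigma>"
      then have "?f \<pi> \<noteq> ?f \<sigma>"
        using init_ideal_inj[OF mo n _ _ pw_agree[OF mo] pw_agree[OF mo]] p s by blast
      then show False using eq by simp
    qed
  qed
  have "card (?f ` {\<pi>. \<pi> permutes {1..n}}) = card {\<pi>. \<pi> permutes {1..n}}"
    by (rule card_image[OF inj])
  also have "\<dots> = fact n" by (rule card_permutations) simp_all
  finally show ?thesis unfolding e .
qed



lemma rank_sum: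
  fixes \<sigma> :: "nat \<Rightarrow> nat"
  assumes p: "\<sigma> permutes {1..n}" and i: "i \<in> {1..n}"
  shows "real (\<sigma> i) = 1 + (\<Sum>j\<in>{1..n}. if \<sigma> j < \<sigma> i then 1 else 0)"
proof -
  have "(\<Sum>j\<in>{1..n}. if \<sigma> j < \<sigma> i then (1::real) else 0) = (\<Sum>j\<in>{j\<in>{1..n}. \<sigma> j < \<sigma> i}. 1)"
    by (rule sum.inter_filter[symmetric]) simp
  also have "\<dots> = real (card {j\<in>{1..n}. \<sigma> j < \<sigma> i})" by (rule real_of_card[symmetric])
  also have "\<dots> = real (\<sigma> i - 1)" by (subst perm_rank[OF p i]) (rule refl)
  finally have e: "(\<Sum>j\<in>{1..n}. if \<sigma> j < \<sigma> i then (1::real) else 0) = real (\<sigma> i - 1)" .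
  have "\<sigma> i \<in> {1..n}" using permutes_in_image[OF p] i by blast
  then show ?thesis unfolding e by (simp add: of_nat_diff)
qed

definition Tsum :: "nat \<Rightarrow> (nat \<Rightarrow> nat) \<Rightarrow> (nat \<Rightarrow> real) \<Rightarrow> real" where
  "Tsum n \<sigma> d = (\<Sum>i\<in>{1..n}. \<Sum>j\<in>{1..n}. if \<sigma> j < \<sigma> i then d i else 0)"

lemma S_eq_T:
  fixes \<sigma> :: "nat \<Rightarrow> nat"
  assumes p: "\<sigma> permutes {1..n}"
  shows "(\<Sum>i\<in>{1..n}. real (\<sigma> i) * d i) = (\<Sum>i\<in>{1..n}. d i) + Tsum n \<sigma> d"
proof -
  have "(\<Sum>i\<in>{1..n}. real (\<sigma> i) * d i)
      = (\<Sum>i\<in>{1..n}. d i + (\<Sum>j\<in>{1..n}. if \<sigma> j < \<sigma> i then d i else 0))"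
  proof (rule sum.cong[OF refl])
    fix i assume i: "i \<in> {1..n}"
    have "real (\<sigma> i) * d i = (1 + (\<Sum>j\<in>{1..n}. if \<sigma> j < \<sigma> i then 1 else 0)) * d i"
      using rank_sum[OF p i] by simp
    also have "\<dots> = d i + (\<Sum>j\<in>{1..n}. (if \<sigma> j < \<sigma> i then 1 else 0) * d i)"
      by (simp add: distrib_right sum_distrib_right)
    also have "(\<Sum>j\<in>{1..n}. (if \<sigma> j < \<sigma> i then 1 else 0) * d i) = (\<Sum>j\<in>{1..n}. if \<sigma> j < \<sigma> i then d i else 0)"
      by (rule sum.cong) auto
    finally show "real (\<sigma> i) * d i = d i + (\<Sum>j\<in>{1..n}. if \<sigma> j < \<sigma> i then d i else 0)" .
  qed
  then show ?thesis unfolding Tsum_def by (simp add: sum.distrib)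
qed

lemma T_sym:
  "(\<Sum>i\<in>A. \<Sum>j\<in>A. (if \<sigma> j < \<sigma> i then d i else 0) + (if \<sigma> i < \<sigma> j then d j else (0::real)))
   = 2 * (\<Sum>i\<in>A. \<Sum>j\<in>A. if \<sigma> j < \<sigma> i then d i else 0)"
proof -
  have "(\<Sum>i\<in>A. \<Sum>j\<in>A. if \<sigma> i < \<sigma> j then d j else (0::real))
      = (\<Sum>j\<in>A. \<Sum>i\<in>A. if \<sigma> i < \<sigma> j then d j else (0::real))"
    by (rule sum.swap)
  then show ?thesis by (simp add: sum.distrib)
qed

lemma rearr:
  fixes \<pi> \<sigma> :: "nat \<Rightarrow> nat" and d :: "nat \<Rightarrow> real"
  assumes p: "\<pi> permutes {1..n}" and s: "\<sigma> permutes {1..n}" and ne: "\<sigma> \<noteq> \<pi>"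
    and st: "\<forall>i\<in>{1..n}. \<forall>j\<in>{1..n}. \<pi> j < \<pi> i \<longrightarrow> d j < d i"
  shows "(\<Sum>i\<in>{1..n}. real (\<sigma> i) * d i) < (\<Sum>i\<in>{1..n}. real (\<pi> i) * d i)"
proof -
  define h where "h \<tau> i j = (if \<tau> j < \<tau> i then d i else 0) + (if \<tau> i < \<tau> j then d j else (0::real))"
    for \<tau> :: "nat \<Rightarrow> nat" and i j
  have le: "h \<sigma> i j \<le> h \<pi> i j" if ij: "i \<in> {1..n}" "j \<in> {1..n}" for i j
  proof (cases "i = j")
    case True then show ?thesis unfolding h_def by simp
  next
    case False
    have "\<sigma> i \<noteq> \<sigma> j" "\<pi> i \<noteq> \<pi> j"
      using False permutes_inj_on[OF s] permutes_inj_on[OF p] ij by (meson inj_onD)+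
    then show ?thesis unfolding h_def using st ij by (auto simp: less_le)
  qed
  obtain i0 j0 where ij0: "i0 \<in> {1..n}" "j0 \<in> {1..n}" "\<pi> j0 < \<pi> i0" "\<not> \<sigma> j0 < \<sigma> i0"
    using perm_order_eq[OF p s] ne by blast
  have "i0 \<noteq> j0" using ij0 by auto
  then have "\<sigma> i0 \<noteq> \<sigma> j0" using permutes_inj_on[OF s] ij0 by (meson inj_onD)
  then have "\<sigma> i0 < \<sigma> j0" using ij0 by simp
  then have lt: "h \<sigma> i0 j0 < h \<pi> i0 j0" unfolding h_def using ij0 st by auto
  have "(\<Sum>i\<in>{1..n}. \<Sum>j\<in>{1..n}. h \<sigma> i j) < (\<Sum>i\<in>{1..n}. \<Sum>j\<in>{1..n}. h \<pi> i j)"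
  proof (rule sum_strict_mono_ex1)
    show "finite {1..n}" by simp
    show "\<forall>i\<in>{1..n}. (\<Sum>j\<in>{1..n}. h \<sigma> i j) \<le> (\<Sum>j\<in>{1..n}. h \<pi> i j)"
      by (intro ballI sum_mono le) auto
    have "(\<Sum>j\<in>{1..n}. h \<sigma> i0 j) < (\<Sum>j\<in>{1..n}. h \<pi> i0 j)"
      by (rule sum_strict_mono_ex1) (use le ij0 lt in auto)
    then show "\<exists>i\<in>{1..n}. (\<Sum>j\<in>{1..n}. h \<sigma> i j) < (\<Sum>j\<in>{1..n}. h \<pi> i j)" using ij0 by blast
  qed
  then have "2 * Tsum n \<sigma> d < 2 * Tsum n \<pi> d"
    unfolding h_def T_sym Tsum_def .
  then show ?thesis unfolding S_eq_T[OF s] S_eq_T[OF p] by simp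
qed

lemma swap_sum:
  fixes \<pi> :: "nat \<Rightarrow> nat" and d :: "nat \<Rightarrow> real"
  assumes ij: "i \<in> {1..n}" "j \<in> {1..n}" "i \<noteq> j"
  shows "(\<Sum>k\<in>{1..n}. real (\<pi> (Transposition.transpose i j k)) * d k)
       = (\<Sum>k\<in>{1..n}. real (\<pi> k) * d k) + (real (\<pi> i) - real (\<pi> j)) * (d j - d i)"
proof -
  have "(\<Sum>k\<in>{1..n}. real (\<pi> (Transposition.transpose i j k)) * d k)
     = (\<Sum>k\<in>{1..n}. real (\<pi> k) * d k + ((if k = i then (real (\<pi> j) - real (\<pi> i)) * d i else 0)
          + (if k = j then (real (\<pi> i) - real (\<pi> j)) * d j else 0)))"
    by (rule sum.cong[OF refl]) (use ij in \<open>auto simp: algebra_simps\<close>)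
  also have "\<dots> = (\<Sum>k\<in>{1..n}. real (\<pi> k) * d k) + ((real (\<pi> j) - real (\<pi> i)) * d i
          + (real (\<pi> i) - real (\<pi> j)) * d j)"
    using ij by (simp add: sum.distrib)
  finally show ?thesis by (simp add: algebra_simps)
qed



lemma dotp_sum:
  assumes "finite S"
  shows "dotp m a (\<Sum>s\<in>S. u s *\<^sub>R s) = (\<Sum>s\<in>S. u s * dotp m a s)"
proof -
  have "dotp m a (\<Sum>s\<in>S. u s *\<^sub>R s) = (\<Sum>k\<in>{1..m}. \<Sum>s\<in>S. lk a k * (u s * lk s k))"
    unfolding dotp_def by (simp add: lookup_sum sum_distrib_left)
  also have "\<dots> = (\<Sum>s\<in>S. \<Sum>k\<in>{1..m}. lk a k * (u s * lk s k))" by (rule sum.swap)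
  also have "\<dots> = (\<Sum>s\<in>S. u s * dotp m a s)"
    unfolding dotp_def by (simp add: sum_distrib_left algebra_simps)
  finally show ?thesis .
qed

lemma conv_max:
  assumes fin: "finite S" and h: "\<forall>s\<in>S. dotp m a s \<le> M" and x: "x \<in> convex hull S"
  shows "dotp m a x \<le> M"
proof -
  obtain u where u: "\<forall>s\<in>S. 0 \<le> u s" "sum u S = 1" "(\<Sum>s\<in>S. u s *\<^sub>R s) = x"
    using x unfolding convex_hull_finite[OF fin] by blast
  have "dotp m a x = (\<Sum>s\<in>S. u s * dotp m a s)" using dotp_sum[OF fin] u(3) by metis
  also have "\<dots> \<le> (\<Sum>s\<in>S. u s * M)" by (rule sum_mono) (use u h in \<open>simp add: mult_left_mono\<close>)
  also have "\<dots> = M" using u(2) by (simp add: sum_distrib_right[symmetric])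
  finally show ?thesis .
qed

lemma conv_unique:
  assumes fin: "finite S" and v: "v \<in> S" and h: "\<forall>s\<in>S. s \<noteq> v \<longrightarrow> dotp m a s < dotp m a v"
  shows "maximizers m (convex hull S) a = {v}"
proof
  have vc: "v \<in> convex hull S" using v by (rule hull_inc)
  have le: "\<forall>s\<in>S. dotp m a s \<le> dotp m a v" using h by force
  show "{v} \<subseteq> maximizers m (convex hull S) a"
    unfolding maximizers_def using vc conv_max[OF fin le] by blast
  show "maximizers m (convex hull S) a \<subseteq> {v}"
  proof
    fix x assume "x \<in> maximizers m (convex hull S) a"
    then have x: "x \<in> convex hull S" "\<forall>y\<in>convex hull S. dotp m a y \<le> dotp m a x"
      unfolding maximizers_def by auto
    obtain u where u: "\<forall>s\<in>S. 0 \<le> u s" "sum u S = 1" "(\<Sum>s\<in>S. u s *\<^sub>R s) = x"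
      using x(1) unfolding convex_hull_finite[OF fin] by blast
    have dx: "dotp m a x = (\<Sum>s\<in>S. u s * dotp m a s)" using dotp_sum[OF fin] u(3) by metis
    have "(\<Sum>s\<in>S. u s * (dotp m a v - dotp m a s)) = dotp m a v - dotp m a x"
      unfolding dx using u(2) by (simp add: algebra_simps sum_subtractf sum_distrib_right[symmetric])
    also have "\<dots> \<le> 0" using x(2) vc by simp
    finally have s0: "(\<Sum>s\<in>S. u s * (dotp m a v - dotp m a s)) \<le> 0" .
    have nn: "\<forall>s\<in>S. 0 \<le> u s * (dotp m a v - dotp m a s)" using u(1) le by simp
    have sz: "(\<Sum>s\<in>S. u s * (dotp m a v - dotp m a s)) = 0"
    proof -
      have "0 \<le> (\<Sum>s\<in>S. u s * (dotp m a v - dotp m a s))" using nn by (simp add: sum_nonneg)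
      then show ?thesis using s0 by linarith
    qed
    have z: "\<forall>s\<in>S. u s * (dotp m a v - dotp m a s) = 0"
    proof -
      have nn': "\<And>s. s \<in> S \<Longrightarrow> 0 \<le> u s * (dotp m a v - dotp m a s)" using nn by blast
      have "(\<Sum>s\<in>S. u s * (dotp m a v - dotp m a s)) = 0 \<longleftrightarrow> (\<forall>s\<in>S. u s * (dotp m a v - dotp m a s) = 0)"
        by (rule sum_nonneg_eq_0_iff[of S "\<lambda>s. u s * (dotp m a v - dotp m a s)", OF fin nn'])
      then show ?thesis using sz by blast
    qed
    have uz: "\<forall>s\<in>S. s \<noteq> v \<longrightarrow> u s = 0"
    proof (intro ballI impI)
      fix s assume "s \<in> S" "s \<noteq> v"
      then have "dotp m a v - dotp m a s \<noteq> 0" using h by force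
      moreover have "u s * (dotp m a v - dotp m a s) = 0" using z \<open>s \<in> S\<close> by blast
      ultimately show "u s = 0" by simp
    qed
    have "sum u S = u v + sum u (S - {v})" using fin v by (simp add: sum.remove)
    moreover have "sum u (S - {v}) = 0" using uz by (intro sum.neutral) blast
    ultimately have uv: "u v = 1" using u(2) by simp
    have "(\<Sum>s\<in>S. u s *\<^sub>R s) = u v *\<^sub>R v + (\<Sum>s\<in>S - {v}. u s *\<^sub>R s)" using fin v by (simp add: sum.remove)
    moreover have "(\<Sum>s\<in>S - {v}. u s *\<^sub>R s) = 0" using uz by (intro sum.neutral) simp
    ultimately have "x = v" using u(3) uv by simp
    then show "x \<in> {v}" by simp
  qed
qed

lemma max_in_S:
  assumes fin: "finite S" and ne: "S \<noteq> {}" and mx: "maximizers m (convex hull S) a = {v}"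
  shows "v \<in> S \<and> (\<forall>s\<in>S. s \<noteq> v \<longrightarrow> dotp m a s < dotp m a v)"
proof -
  obtain s0 where s0: "s0 \<in> S" "\<forall>s\<in>S. dotp m a s \<le> dotp m a s0"
  proof -
    have "Max (dotp m a ` S) \<in> dotp m a ` S" using fin ne by simp
    then obtain s0 where "s0 \<in> S" "dotp m a s0 = Max (dotp m a ` S)" by auto
    moreover have "\<forall>s\<in>S. dotp m a s \<le> Max (dotp m a ` S)" using fin by simp
    ultimately show ?thesis using that by metis
  qed
  have "s0 \<in> maximizers m (convex hull S) a"
    unfolding maximizers_def using hull_inc[OF s0(1)] conv_max[OF fin s0(2)] by blast
  then have sv: "s0 = v" using mx by blast
  have "\<forall>s\<in>S. s \<noteq> v \<longrightarrow> dotp m a s < dotp m a v"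
  proof (intro ballI impI)
    fix s assume s: "s \<in> S" "s \<noteq> v"
    have le: "dotp m a s \<le> dotp m a v" using s0 sv s by blast
    show "dotp m a s < dotp m a v"
    proof (rule ccontr)
      assume "\<not> dotp m a s < dotp m a v"
      then have "dotp m a s = dotp m a v" using le by simp
      then have "s \<in> maximizers m (convex hull S) a"
        unfolding maximizers_def using hull_inc[OF s(1)] conv_max[OF fin s0(2)] sv by auto
      then show False using mx s(2) by blast
    qed
  qed
  then show ?thesis using s0(1) sv by blast
qed



definition vp :: "nat \<Rightarrow> (nat \<Rightarrow> nat) \<Rightarrow> (nat \<Rightarrow>\<^sub>0 real)" where
  "vp n \<pi> = (\<Sum>i\<in>{1..n}. sg i (real (\<pi> i)) + sg (n+i) (- real (\<pi> i)))"

lemma lk_vp: "lk (vp n \<pi>) k =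
   (if k \<in> {1..n} then real (\<pi> k) else if k \<in> {n+1..2*n} then - real (\<pi> (k-n)) else 0)"
  unfolding vp_def by (rule lk_sum_single2)

lemma dotp_vp: "dotp (2*n) a (vp n \<sigma>) = (\<Sum>i\<in>{1..n}. real (\<sigma> i) * dd n a i)"
proof -
  have "dotp (2*n) a (vp n \<sigma>) = (\<Sum>k\<in>{1..n}. lk a k * lk (vp n \<sigma>) k + lk a (n+k) * lk (vp n \<sigma>) (n+k))"
    unfolding dotp_def by (rule sum_split2n)
  also have "\<dots> = (\<Sum>i\<in>{1..n}. real (\<sigma> i) * dd n a i)"
  proof (rule sum.cong[OF refl])
    fix k assume k: "k \<in> {1..n}"
    then have "n + k \<notin> {1..n}" "n + k \<in> {n+1..2*n}" by auto
    then show "lk a k * lk (vp n \<sigma>) k + lk a (n+k) * lk (vp n \<sigma>) (n+k) = real (\<sigma> k) * dd n a k"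
      using k unfolding lk_vp dd_def by (simp add: algebra_simps)
  qed
  finally show ?thesis .
qed

lemma vp_inj:
  assumes p: "\<pi> permutes {1..n}" and s: "\<sigma> permutes {1..n}" and e: "vp n \<sigma> = vp n \<pi>"
  shows "\<sigma> = \<pi>"
proof
  fix k
  show "\<sigma> k = \<pi> k"
  proof (cases "k \<in> {1..n}")
    case True
    have "lk (vp n \<sigma>) k = lk (vp n \<pi>) k" using e by simp
    then show ?thesis using True unfolding lk_vp by simp
  next
    case False
    then show ?thesis using permutes_not_in[OF p] permutes_not_in[OF s] by metis
  qed
qed

definition SS :: "nat \<Rightarrow> (nat \<Rightarrow>\<^sub>0 real) set" where
  "SS n = vp n ` {\<pi>. \<pi> permutes {1..n}}"

lemma SS_finite: "finite (SS n)"
  unfolding SS_def by (simp add: finite_permutations)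

lemma SS_ne: "SS n \<noteq> {}"
  unfolding SS_def using permutes_id by blast

lemma vp_Rvec: "vp n \<pi> \<in> Rvec (2*n)"
  unfolding Rvec_iff lk_vp by auto

lemma SS_Rvec: "SS n \<subseteq> Rvec (2*n)"
  unfolding SS_def using vp_Rvec by blast

definition strict :: "nat \<Rightarrow> (nat \<Rightarrow> nat) \<Rightarrow> (nat \<Rightarrow>\<^sub>0 real) \<Rightarrow> bool" where
  "strict n \<pi> a \<longleftrightarrow> (\<forall>i\<in>{1..n}. \<forall>j\<in>{1..n}. \<pi> j < \<pi> i \<longrightarrow> dd n a j < dd n a i)"

lemma max_iff:
  assumes p: "\<pi> permutes {1..n}"
  shows "maximizers (2*n) (convex hull SS n) a = {vp n \<pi>} \<longleftrightarrow> strict n \<pi> a"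
proof
  assume st: "strict n \<pi> a"
  show "maximizers (2*n) (convex hull SS n) a = {vp n \<pi>}"
  proof (rule conv_unique[OF SS_finite])
    show "vp n \<pi> \<in> SS n" unfolding SS_def using p by blast
    show "\<forall>s\<in>SS n. s \<noteq> vp n \<pi> \<longrightarrow> dotp (2*n) a s < dotp (2*n) a (vp n \<pi>)"
    proof (intro ballI impI)
      fix s assume s: "s \<in> SS n" "s \<noteq> vp n \<pi>"
      then obtain \<sigma> where \<sigma>: "\<sigma> permutes {1..n}" "s = vp n \<sigma>" unfolding SS_def by blast
      then have "\<sigma> \<noteq> \<pi>" using s by blast
      then show "dotp (2*n) a s < dotp (2*n) a (vp n \<pi>)"
        unfolding \<sigma>(2) dotp_vp using rearr[OF p \<sigma>(1)] st unfolding strict_def by blast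
    qed
  qed
next
  assume mx: "maximizers (2*n) (convex hull SS n) a = {vp n \<pi>}"
  note ms = max_in_S[OF SS_finite SS_ne mx]
  show "strict n \<pi> a"
    unfolding strict_def
  proof (intro ballI impI)
    fix i j assume ij: "i \<in> {1..n}" "j \<in> {1..n}" "\<pi> j < \<pi> i"
    show "dd n a j < dd n a i"
    proof (rule ccontr)
      assume h: "\<not> dd n a j < dd n a i"
      have "i \<noteq> j" using ij by auto
      let ?\<sigma> = "\<pi> \<circ> Transposition.transpose i j"
      have sp: "?\<sigma> permutes {1..n}" by (rule permutes_compose[OF permutes_swap_id[OF ij(1,2)] p])
      have "?\<sigma> i \<noteq> \<pi> i" using ij by simp
      then have "?\<sigma> \<noteq> \<pi>" by metis
      then have "vp n ?\<sigma> \<noteq> vp n \<pi>" using vp_inj[OF p sp] by blast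
      moreover have "vp n ?\<sigma> \<in> SS n" unfolding SS_def using sp by blast
      ultimately have lt: "dotp (2*n) a (vp n ?\<sigma>) < dotp (2*n) a (vp n \<pi>)" using ms by blast
      have "dotp (2*n) a (vp n ?\<sigma>) = dotp (2*n) a (vp n \<pi>) + (real (\<pi> i) - real (\<pi> j)) * (dd n a j - dd n a i)"
        unfolding dotp_vp o_apply by (rule swap_sum[OF ij(1,2) \<open>i \<noteq> j\<close>])
      moreover have "0 \<le> (real (\<pi> i) - real (\<pi> j)) * (dd n a j - dd n a i)"
        using ij(3) h by simp
      ultimately show False using lt by simp
    qed
  qed
qed

lemma max_vertex:
  assumes "maximizers (2*n) (convex hull SS n) a = {v}"
  shows "\<exists>\<pi>. \<pi> permutes {1..n} \<and> v = vp n \<pi>"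
  using max_in_S[OF SS_finite SS_ne assms] unfolding SS_def by blast



lemma norm_pm: "norm (x :: nat \<Rightarrow>\<^sub>0 real) = (\<Sum>k\<in>ks x. \<bar>lk x k\<bar>)"
  unfolding norm_poly_mapping_def dist_poly_mapping_def by (simp add: dist_real_def)

lemma lk_le_norm: "\<bar>lk (x :: nat \<Rightarrow>\<^sub>0 real) k\<bar> \<le> norm x"
proof (cases "k \<in> ks x")
  case True
  then show ?thesis unfolding norm_pm by (rule member_le_sum) auto
next
  case False
  then show ?thesis by (simp add: in_keys_iff)
qed

lemma lk_bl: "bounded_linear (\<lambda>x :: nat \<Rightarrow>\<^sub>0 real. lk x k)"
  by (rule bounded_linear_intro[where K=1]) (simp_all add: lookup_add lk_le_norm)

lemma lk_cont: "continuous_on UNIV (\<lambda>x :: nat \<Rightarrow>\<^sub>0 real. lk x k)"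
  by (rule linear_continuous_on[OF lk_bl])

lemma dd_cont: "continuous_on UNIV (\<lambda>x. dd n x i)"
  unfolding dd_def by (intro continuous_on_diff lk_cont)

definition Nc where "Nc n \<pi> = {a \<in> Rvec (2*n). strict n \<pi> a}"
definition Ec where "Ec ord n \<pi> = {a \<in> Rvec (2*n). agree ord n a \<pi>}"
definition Kc where "Kc n \<pi> = {a \<in> Rvec (2*n). \<forall>i\<in>{1..n}. \<forall>j\<in>{1..n}. \<pi> j < \<pi> i \<longrightarrow> dd n a j \<le> dd n a i}"

lemma Kc_closed: "closed (Kc n \<pi>)"
proof -
  have "Kc n \<pi> = (\<Inter>k\<in>-{1..2*n}. {a. lk a k = 0}) \<inter>
      (\<Inter>ij\<in>{(i,j). i\<in>{1..n} \<and> j\<in>{1..n} \<and> \<pi> j < \<pi> i}. {a. dd n a (snd ij) \<le> dd n a (fst ij)})"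
    unfolding Kc_def Rvec_iff by auto
  moreover have "closed (\<Inter>k\<in>-{1..2*n}. {a :: nat \<Rightarrow>\<^sub>0 real. lk a k = 0})"
    by (intro closed_INT ballI closed_Collect_eq lk_cont continuous_on_const)
  moreover have "closed (\<Inter>ij\<in>{(i,j). i\<in>{1..n} \<and> j\<in>{1..n} \<and> \<pi> j < \<pi> i}. {a. dd n a (snd ij) \<le> dd n a (fst ij)})"
    by (intro closed_INT ballI closed_Collect_le dd_cont)
  ultimately show ?thesis by (simp add: closed_Int)
qed

lemma Nc_Ec: "monomial_order ord \<Longrightarrow> \<pi> permutes {1..n} \<Longrightarrow> Nc n \<pi> \<subseteq> Ec ord n \<pi>"
  unfolding Nc_def Ec_def strict_def using agree_strict by blast

lemma Ec_Kc: "Ec ord n \<pi> \<subseteq> Kc n \<pi>"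
  unfolding Ec_def Kc_def using agree_weak by blast

lemma Kc_closure_Nc:
  fixes \<pi> :: "nat \<Rightarrow> nat"
  shows "Kc n \<pi> \<subseteq> closure (Nc n \<pi>)"
proof
  fix a assume a: "a \<in> Kc n \<pi>"
  define pv :: "nat \<Rightarrow>\<^sub>0 real" where "pv = (\<Sum>i\<in>{1..n}. sg i (real (\<pi> i)))"
  have lpv: "lk pv k = (if k \<in> {1..n} then real (\<pi> k) else 0)" for k
    unfolding pv_def by (rule lk_sum_single) simp
  show "a \<in> closure (Nc n \<pi>)"
    unfolding closure_approachable
  proof (intro allI impI)
    fix e :: real assume e: "0 < e"
    define \<epsilon> where "\<epsilon> = e / (norm pv + 1)"
    have np: "0 \<le> norm pv" by simp
    have \<epsilon>0: "0 < \<epsilon>" unfolding \<epsilon>_def using e np by (intro divide_pos_pos) linarith+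
    have "\<epsilon> * norm pv < \<epsilon> * (norm pv + 1)" using \<epsilon>0 by simp
    also have "\<epsilon> * (norm pv + 1) = e" unfolding \<epsilon>_def
    proof -
      have "norm pv + 1 \<noteq> 0" using np by linarith
      then show "e / (norm pv + 1) * (norm pv + 1) = e" by simp
    qed
    finally have lt: "\<epsilon> * norm pv < e" .
    let ?y = "a + \<epsilon> *\<^sub>R pv"
    have ly: "lk ?y k = lk a k + \<epsilon> * lk pv k" for k by (simp add: lookup_add)
    have yR: "?y \<in> Rvec (2*n)" using a unfolding Kc_def Rvec_iff ly lpv by auto
    have ddy: "dd n ?y i = dd n a i + \<epsilon> * real (\<pi> i)" if "i \<in> {1..n}" for i
      using that unfolding dd_def ly lpv by auto
    have "strict n \<pi> ?y"
      unfolding strict_def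
    proof (intro ballI impI)
      fix i j assume ij: "i \<in> {1..n}" "j \<in> {1..n}" "\<pi> j < \<pi> i"
      have "dd n a j \<le> dd n a i" using a ij unfolding Kc_def by blast
      moreover have "\<epsilon> * real (\<pi> j) < \<epsilon> * real (\<pi> i)" using ij(3) \<epsilon>0 by simp
      ultimately show "dd n ?y j < dd n ?y i" using ddy ij by simp
    qed
    then have "?y \<in> Nc n \<pi>" unfolding Nc_def using yR by blast
    moreover have "dist ?y a = \<epsilon> * norm pv" using \<epsilon>0 by (simp add: dist_norm)
    ultimately show "\<exists>y\<in>Nc n \<pi>. dist y a < e" using lt by metis
  qed
qed

lemma closure_Nc: "closure (Nc n \<pi>) = Kc n \<pi>"
proof
  have "Nc n \<pi> \<subseteq> Kc n \<pi>" unfolding Nc_def Kc_def strict_def by (auto intro: less_imp_le)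
  then show "closure (Nc n \<pi>) \<subseteq> Kc n \<pi>" using Kc_closed closure_minimal by blast
  show "Kc n \<pi> \<subseteq> closure (Nc n \<pi>)" by (rule Kc_closure_Nc)
qed

lemma closure_Ec:
  assumes mo: "monomial_order ord" and p: "\<pi> permutes {1..n}"
  shows "closure (Ec ord n \<pi>) = Kc n \<pi>"
proof
  show "closure (Ec ord n \<pi>) \<subseteq> Kc n \<pi>" using Ec_Kc Kc_closed closure_minimal by blast
  have "closure (Nc n \<pi>) \<subseteq> closure (Ec ord n \<pi>)" by (rule closure_mono[OF Nc_Ec[OF mo p]])
  then show "Kc n \<pi> \<subseteq> closure (Ec ord n \<pi>)" unfolding closure_Nc .
qed



lemma class_eq:
  assumes mo: "monomial_order ord" and n: "1 \<le> n" and p: "\<pi> permutes {1..n}" and ag: "agree ord n w \<pi>"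
  shows "{w' \<in> Rvec (2*n). init_ideal ord (2*n) w' (toric_ideal n) = init_ideal ord (2*n) w (toric_ideal n)}
     = Ec ord n \<pi>"
proof (intro equalityI subsetI)
  fix w' assume "w' \<in> {w' \<in> Rvec (2*n). init_ideal ord (2*n) w' (toric_ideal n) = init_ideal ord (2*n) w (toric_ideal n)}"
  then have w': "w' \<in> Rvec (2*n)" "init_ideal ord (2*n) w' (toric_ideal n) = init_ideal ord (2*n) w (toric_ideal n)"
    by auto
  obtain \<sigma> where s: "\<sigma> permutes {1..n}" "agree ord n w' \<sigma>" using agree_exists[OF mo n] by blast
  have "\<sigma> = \<pi>"
  proof (rule ccontr)
    assume "\<sigma> \<noteq> \<pi>"
    then show False using init_ideal_inj[OF mo n s(1) p s(2) ag] w'(2) by blast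
  qed
  then show "w' \<in> Ec ord n \<pi>" unfolding Ec_def using w'(1) s(2) by blast
next
  fix w' assume "w' \<in> Ec ord n \<pi>"
  then have w': "w' \<in> Rvec (2*n)" "agree ord n w' \<pi>" unfolding Ec_def by auto
  then show "w' \<in> {w' \<in> Rvec (2*n). init_ideal ord (2*n) w' (toric_ideal n) = init_ideal ord (2*n) w (toric_ideal n)}"
    using init_ideal_eq[OF mo n permutes_inj_on[OF p] w'(2) ag] by blast
qed

lemma groebner_eq:
  assumes mo: "monomial_order ord" and n: "1 \<le> n"
  shows "groebner_cones ord (2*n) (toric_ideal n) = {Kc n \<pi> | \<pi>. \<pi> permutes {1..n}}"
  unfolding groebner_cones_def
proof (intro equalityI subsetI)
  fix C assume "C \<in> {closure {w' \<in> Rvec (2*n). init_ideal ord (2*n) w' (toric_ideal n) = init_ideal ord (2*n) w (toric_ideal n)} | w. w \<in> Rvec (2*n)}"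
  then obtain w where w: "C = closure {w' \<in> Rvec (2*n). init_ideal ord (2*n) w' (toric_ideal n) = init_ideal ord (2*n) w (toric_ideal n)}"
    by blast
  obtain \<pi> where p: "\<pi> permutes {1..n}" "agree ord n w \<pi>" using agree_exists[OF mo n] by blast
  have "C = Kc n \<pi>" unfolding w class_eq[OF mo n p] closure_Ec[OF mo p(1)] ..
  then show "C \<in> {Kc n \<pi> | \<pi>. \<pi> permutes {1..n}}" using p(1) by blast
next
  fix C assume "C \<in> {Kc n \<pi> | \<pi>. \<pi> permutes {1..n}}"
  then obtain \<pi> where p: "\<pi> permutes {1..n}" "C = Kc n \<pi>" by blast
  have "C = closure {w' \<in> Rvec (2*n). init_ideal ord (2*n) w' (toric_ideal n) = init_ideal ord (2*n) (perm_weight n \<pi>) (toric_ideal n)}"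
    unfolding class_eq[OF mo n p(1) pw_agree[OF mo p(1)]] closure_Ec[OF mo p(1)] p(2) ..
  then show "C \<in> {closure {w' \<in> Rvec (2*n). init_ideal ord (2*n) w' (toric_ideal n) = init_ideal ord (2*n) w (toric_ideal n)} | w. w \<in> Rvec (2*n)}"
    using pw_Rvec by blast
qed

lemma pw_strict: "\<pi> permutes {1..n} \<Longrightarrow> strict n \<pi> (perm_weight n \<pi>)"
  unfolding strict_def by (simp add: dd_pw)

lemma ncone_vp: "\<pi> permutes {1..n} \<Longrightarrow> normal_cone (2*n) (convex hull SS n) {vp n \<pi>} = Nc n \<pi>"
  unfolding normal_cone_def Nc_def using max_iff by blast

lemma nfan_eq:
  shows "normal_fan_max_cones (2*n) (convex hull SS n) = {Kc n \<pi> | \<pi>. \<pi> permutes {1..n}}"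
  unfolding normal_fan_max_cones_def
proof (intro equalityI subsetI)
  fix C assume "C \<in> {closure (normal_cone (2*n) (convex hull SS n) {v}) | v. normal_cone (2*n) (convex hull SS n) {v} \<noteq> {}}"
  then obtain v where v: "C = closure (normal_cone (2*n) (convex hull SS n) {v})"
     "normal_cone (2*n) (convex hull SS n) {v} \<noteq> {}" by blast
  then obtain a where "a \<in> normal_cone (2*n) (convex hull SS n) {v}" by blast
  then have "maximizers (2*n) (convex hull SS n) a = {v}" unfolding normal_cone_def by blast
  then obtain \<pi> where p: "\<pi> permutes {1..n}" "v = vp n \<pi>" using max_vertex by blast
  have "C = Kc n \<pi>" unfolding v(1) p(2) ncone_vp[OF p(1)] closure_Nc ..
  then show "C \<in> {Kc n \<pi> | \<pi>. \<pi> permutes {1..n}}" using p(1) by blast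
next
  fix C assume "C \<in> {Kc n \<pi> | \<pi>. \<pi> permutes {1..n}}"
  then obtain \<pi> where p: "\<pi> permutes {1..n}" "C = Kc n \<pi>" by blast
  have "perm_weight n \<pi> \<in> Nc n \<pi>" unfolding Nc_def using pw_Rvec pw_strict[OF p(1)] by blast
  then have ne: "normal_cone (2*n) (convex hull SS n) {vp n \<pi>} \<noteq> {}" unfolding ncone_vp[OF p(1)] by blast
  have "C = closure (normal_cone (2*n) (convex hull SS n) {vp n \<pi>})"
    unfolding ncone_vp[OF p(1)] closure_Nc p(2) ..
  then show "C \<in> {closure (normal_cone (2*n) (convex hull SS n) {v}) | v. normal_cone (2*n) (convex hull SS n) {v} \<noteq> {}}"
    using ne by blast
qed

lemma state_poly:
  assumes mo: "monomial_order ord" and n: "1 \<le> n"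
  shows "state_polytope ord (2*n) (toric_ideal n) (convex hull SS n)"
  unfolding state_polytope_def polytope_in_def groebner_eq[OF mo n] nfan_eq
  using SS_finite SS_Rvec by blast



definition Mm :: "nat \<Rightarrow> nat \<Rightarrow> nat \<Rightarrow> int" where
  "Mm n i j = (if i = j then 1 else 0) + (if n < i \<and> j = i - n then 1 else 0)"
definition Nm :: "nat \<Rightarrow> nat \<Rightarrow> nat \<Rightarrow> int" where
  "Nm n i j = (if i = j then 1 else 0) - (if n < i \<and> j = i - n then 1 else 0)"

lemma sum_shift_delta:
  fixes F :: "nat \<Rightarrow> 'a::comm_ring_1"
  assumes i: "i \<in> {1..2*n}"
  shows "(\<Sum>k\<in>{1..2*n}. if n < i \<and> k = i - n then F k else 0) = (if n < i then F (i - n) else 0)"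
proof (cases "n < i")
  case True
  then have "i - n \<in> {1..2*n}" using i by auto
  then show ?thesis using True by (simp add: sum.delta)
next
  case False
  then show ?thesis by simp
qed

lemma sum_M:
  fixes F :: "nat \<Rightarrow> 'a::comm_ring_1"
  assumes i: "i \<in> {1..2*n}"
  shows "(\<Sum>k\<in>{1..2*n}. of_int (Mm n i k) * F k) = F i + (if n < i then F (i - n) else 0)"
proof -
  have "(\<Sum>k\<in>{1..2*n}. of_int (Mm n i k) * F k)
      = (\<Sum>k\<in>{1..2*n}. (if k = i then F k else 0) + (if n < i \<and> k = i - n then F k else 0))"
    by (rule sum.cong[OF refl]) (auto simp: Mm_def algebra_simps)
  also have "\<dots> = F i + (if n < i then F (i - n) else 0)"
    unfolding sum.distrib sum_shift_delta[OF i] using i by (simp add: sum.delta)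
  finally show ?thesis .
qed

lemma sum_N:
  fixes F :: "nat \<Rightarrow> 'a::comm_ring_1"
  assumes i: "i \<in> {1..2*n}"
  shows "(\<Sum>k\<in>{1..2*n}. of_int (Nm n i k) * F k) = F i - (if n < i then F (i - n) else 0)"
proof -
  have "(\<Sum>k\<in>{1..2*n}. of_int (Nm n i k) * F k)
      = (\<Sum>k\<in>{1..2*n}. (if k = i then F k else 0) - (if n < i \<and> k = i - n then F k else 0))"
    by (rule sum.cong[OF refl]) (auto simp: Nm_def algebra_simps)
  also have "\<dots> = F i - (if n < i then F (i - n) else 0)"
    unfolding sum_subtractf sum_shift_delta[OF i] using i by (simp add: sum.delta)
  finally show ?thesis .
qed

lemma MN:
  assumes i: "i \<in> {1..2*n}" and j: "j \<in> {1..2*n}"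
  shows "(\<Sum>k\<in>{1..2*n}. Mm n i k * Nm n k j) = (if i = j then 1 else 0)"
proof -
  have "(\<Sum>k\<in>{1..2*n}. Mm n i k * Nm n k j) = (\<Sum>k\<in>{1..2*n}. of_int (Mm n i k) * Nm n k j)" by simp
  also have "\<dots> = Nm n i j + (if n < i then Nm n (i - n) j else 0)" by (rule sum_M[OF i])
  also have "\<dots> = (if i = j then 1 else 0)" using i j by (auto simp: Nm_def)
  finally show ?thesis .
qed

lemma NM:
  assumes i: "i \<in> {1..2*n}" and j: "j \<in> {1..2*n}"
  shows "(\<Sum>k\<in>{1..2*n}. Nm n i k * Mm n k j) = (if i = j then 1 else 0)"
proof -
  have "(\<Sum>k\<in>{1..2*n}. Nm n i k * Mm n k j) = (\<Sum>k\<in>{1..2*n}. of_int (Nm n i k) * Mm n k j)" by simp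
  also have "\<dots> = Mm n i j - (if n < i then Mm n (i - n) j else 0)" by (rule sum_N[OF i])
  also have "\<dots> = (if i = j then 1 else 0)" using i j by (auto simp: Mm_def)
  finally show ?thesis .
qed

definition Phi :: "nat \<Rightarrow> (nat \<Rightarrow>\<^sub>0 real) \<Rightarrow> (nat \<Rightarrow>\<^sub>0 real)" where
  "Phi n x = (\<Sum>i\<in>{1..2*n}. sg i (\<Sum>j\<in>{1..2*n}. of_int (Mm n i j) * lk x j))"

lemma lk_Phi: "lk (Phi n x) k = (if k \<in> {1..2*n} then lk x k + (if n < k then lk x (k - n) else 0) else 0)"
  unfolding Phi_def lk_sum_single[OF finite_atLeastAtMost] by (simp add: sum_M)

lemma Phi_linear: "linear (Phi n)"
proof (rule linearI)
  fix x y show "Phi n (x + y) = Phi n x + Phi n y"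
    by (rule poly_mapping_eqI) (simp add: lk_Phi lookup_add)
next
  fix c x show "Phi n (c *\<^sub>R x) = c *\<^sub>R Phi n x"
    by (rule poly_mapping_eqI) (simp add: lk_Phi algebra_simps)
qed

lemma Phi_vp: "Phi n (vp n \<pi>) = perm_vec n \<pi>"
proof (rule poly_mapping_eqI)
  fix k
  have lpv: "lk (perm_vec n \<pi>) k = (if k \<in> {1..n} then real (\<pi> k) else 0)"
    unfolding perm_vec_def by (rule lk_sum_single) simp
  show "lk (Phi n (vp n \<pi>)) k = lk (perm_vec n \<pi>) k"
  proof (cases "k \<in> {1..n}")
    case True
    then show ?thesis unfolding lk_Phi lpv lk_vp by simp
  next
    case False
    show ?thesis
    proof (cases "k \<in> {n+1..2*n}")
      case True
      then have "k - n \<in> {1..n}" by auto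
      then show ?thesis unfolding lk_Phi lpv lk_vp using True False by simp
    next
      case False2: False
      then show ?thesis unfolding lk_Phi lpv lk_vp using False by auto
    qed
  qed
qed

lemma unimod:
  shows "unimod_equiv (2*n) (convex hull SS n) (permutohedron n)"
  unfolding unimod_equiv_def
proof (intro exI conjI)
  show "\<forall>i\<in>{1..2*n}. \<forall>j\<in>{1..2*n}.
            (\<Sum>k\<in>{1..2*n}. Mm n i k * Nm n k j) = (if i = j then 1 else 0)
          \<and> (\<Sum>k\<in>{1..2*n}. Nm n i k * Mm n k j) = (if i = j then 1 else 0)"
    using MN NM by blast
  have e: "(\<lambda>x. \<Sum>i\<in>{1..2*n}. sg i (of_int ((\<lambda>_. 0::int) i) + (\<Sum>j\<in>{1..2*n}. of_int (Mm n i j) * lk x j))) = Phi n"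
    unfolding Phi_def by simp
  have "Phi n ` (convex hull SS n) = convex hull (Phi n ` SS n)"
    by (rule convex_hull_linear_image[OF Phi_linear])
  also have "Phi n ` SS n = {perm_vec n \<pi> | \<pi>. \<pi> permutes {1..n}}"
    unfolding SS_def image_image Phi_vp by blast
  finally show "permutohedron n = (\<lambda>x. \<Sum>i\<in>{1..2*n}. sg i (of_int ((\<lambda>_. 0::int) i) + (\<Sum>j\<in>{1..2*n}. of_int (Mm n i j) * lk x j))) ` (convex hull SS n)"
    unfolding e permutohedron_def by simp
qed


theorem mainTheorem6:
  fixes n :: nat and ord :: "mon \<Rightarrow> mon \<Rightarrow> bool"
  assumes "1 \<le> n"
    and "monomial_order ord"
  shows "(\<exists>P. state_polytope ord (2*n) (toric_ideal n) P
              \<and> unimod_equiv (2*n) P (permutohedron n))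
       \<and> card {init_ideal ord (2*n) w (toric_ideal n) | w. w \<in> Rvec (2*n)} = fact n
       \<and> {init_ideal ord (2*n) w (toric_ideal n) | w. w \<in> Rvec (2*n)}
           = {init_ideal ord (2*n) (perm_weight n \<pi>) (toric_ideal n) | \<pi>. \<pi> permutes {1..n}}"
  using state_poly[OF assms(2,1)] unimod[of n] init_ideals_card[OF assms(2,1)]
    init_ideals_perm[OF assms(2,1)] by blast

end
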